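(* In the QC setting, with $x_{\rm avg}(i)=\frac1N\mathbf{1}^T\mathbf{x}(i)$, for every $a>0$, $$\mathbb{P}\Big[\sup_{j\ge0}|x_{\rm avg}(j)|>a\Big]\le\frac{\Big[x_{\rm avg}^2(0)+\frac{2|\mathcal{M}|\Delta^2}{3N^2}\sum_{j\ge0}\alpha^2(j)\Big]^{1/2}}{a}.$$
   Context: QC setting. Let $N\ge 2$; all random objects live on one probability space. $\{L(i)\}_{i\ge0}$ is an i.i.d. sequence of random graph Laplacians $L(i)=D(i)-A(i)$, where $A(i)$ is the adjacency matrix (symmetric, $\{0,1\}$-valued, zero diagonal) of a random undirected simple graph on $\{1,\dots,N\}$, $D(i)=\mathrm{diag}(d_1(i),\dots,d_N(i))$ with $d_n(i)$ the degree of node $n$, and $\Omega_n(i)=\{l:A_{nl}(i)=1\}$. Link failures at a given time may be arbitrarily correlated across edges. Let $\overline{L}=\mathbb{E}[L(i)]$ with eigenvalues $0=\lambda_1(\overline{L})\le\lambda_2(\overline{L})\le\cdots\le\lambda_N(\overline{L})$; assume $\lambda_2(\overline{L})>0$. $\mathcal{M}$ denotes the set of realizable edges (those appearing in the random graph with positive probability). Quantizer: step $\Delta>0$, $q(y)=k\Delta$ if $(k-\tfrac12)\Delta\le y<(k+\tfrac12)\Delta$, $k\in\mathbb{Z}$. Dither: $\{\nu_{nl}(i)\}$ i.i.d. uniform on $[-\Delta/2,\Delta/2)$, independent of $\{L(i)\}$. Weights: deterministic $\alpha(i)>0$ with $\sum_i\alpha(i)=\infty$, $\sum_i\alpha^2(i)<\infty$.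 QC recursion: $x_n(i+1)=(1-\alpha(i)d_n(i))x_n(i)+\alpha(i)\sum_{l\in\Omega_n(i)}q(x_l(i)+\nu_{nl}(i))$, with deterministic $\mathbf{x}(0)\in\mathbb{R}^N$. With $\varepsilon_{nl}(i)=q(x_l(i)+\nu_{nl}(i))-(x_l(i)+\nu_{nl}(i))$, $\Upsilon_n(i)=-\sum_{l\in\Omega_n(i)}\nu_{nl}(i)$, $\Psi_n(i)=-\sum_{l\in\Omega_n(i)}\varepsilon_{nl}(i)$, this reads $\mathbf{x}(i+1)=\mathbf{x}(i)-\alpha(i)[L(i)\mathbf{x}(i)+\Upsilon(i)+\Psi(i)]$. Conditionally on $\mathbf{x}(0),\{L(j),\Upsilon(j),\Psi(j)\}_{j<i}$ and $L(i)$, the $\varepsilon_{nl}(i)$ are i.i.d. uniform on $[-\Delta/2,\Delta/2)$ (as are the $\nu_{nl}(i)$). *)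

theory Defs
  imports "HOL-Probability.Probability"
begin

text \<open>Quantizer with step Delta: q(y) = k Delta iff (k - 1/2) Delta \<le> y < (k + 1/2) Delta.\<close>
definition quant :: "real \<Rightarrow> real \<Rightarrow> real" where
  "quant \<Delta> y = \<Delta> * of_int \<lfloor>y / \<Delta> + 1/2\<rfloor>"

definition nbhd :: "('n \<Rightarrow> 'n \<Rightarrow> bool) \<Rightarrow> 'n \<Rightarrow> 'n set" where
  "nbhd Adj n = {l. Adj n l}"

definition degree :: "('n \<Rightarrow> 'n \<Rightarrow> bool) \<Rightarrow> 'n \<Rightarrow> nat" where
  "degree Adj n = card (nbhd Adj n)"

text \<open>The QC recursion. A i \<omega> is the adjacency of the random graph at time i,
  \<nu> i n l \<omega> the dither nu_{nl}(i), \<alpha> the weights, x0 the initial state.\<close>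
primrec qc_state ::
  "('n::finite \<Rightarrow> real) \<Rightarrow> (nat \<Rightarrow> 'a \<Rightarrow> 'n \<Rightarrow> 'n \<Rightarrow> bool) \<Rightarrow>
   (nat \<Rightarrow> 'n \<Rightarrow> 'n \<Rightarrow> 'a \<Rightarrow> real) \<Rightarrow> (nat \<Rightarrow> real) \<Rightarrow> real \<Rightarrow>
   nat \<Rightarrow> 'a \<Rightarrow> 'n \<Rightarrow> real" where
  "qc_state x0 A \<nu> \<alpha> \<Delta> 0 \<omega> = x0"
| "qc_state x0 A \<nu> \<alpha> \<Delta> (Suc i) \<omega> =
     (\<lambda>n. (1 - \<alpha> i * real (degree (A i \<omega>) n)) * qc_state x0 A \<nu> \<alpha> \<Delta> i \<omega> n
          + \<alpha> i * (\<Sum>l\<in>nbhd (A i \<omega>) n. quant \<Delta> (qc_state x0 A \<nu> \<alpha> \<Delta> i \<omega> l + \<nu> i n l \<omega>)))"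

definition avg :: "('n::finite \<Rightarrow> real) \<Rightarrow> real" where
  "avg v = (\<Sum>n\<in>UNIV. v n) / real CARD('n)"

text \<open>Realizable edges: unordered edges {n,l} present with positive probability
  (the graphs are identically distributed, so time 0 suffices).\<close>
definition realizable_edges ::
  "'a measure \<Rightarrow> (nat \<Rightarrow> 'a \<Rightarrow> 'n \<Rightarrow> 'n \<Rightarrow> bool) \<Rightarrow> 'n set set" where
  "realizable_edges M A =
     {{n, l} | n l. n \<noteq> l \<and> measure M {\<omega> \<in> space M. A 0 \<omega> n l} > 0}"

end

theory Submission
  imports Defs
begin

definition clip :: "real \<Rightarrow> real \<Rightarrow> real" where
  "clip \<Delta> v = max (-\<Delta>/2) (min (\<Delta>/2) v)"

lemma unif_step_integral:
  fixes \<Delta> v0 c1 c2 :: real and h :: "real \<Rightarrow> real"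
  assumes D: "\<Delta> > 0" and v0: "-\<Delta>/2 \<le> v0" "v0 \<le> \<Delta>/2"
    and hm: "h \<in> borel_measurable borel"
    and h: "\<And>v. -\<Delta>/2 \<le> v \<Longrightarrow> v < \<Delta>/2 \<Longrightarrow> h v = (if v < v0 then c1 else c2)"
  shows "(\<integral>v. h v \<partial>uniform_measure lborel {-\<Delta>/2..<\<Delta>/2})
         = c1 * ((v0 + \<Delta>/2)/\<Delta>) + c2 * ((\<Delta>/2 - v0)/\<Delta>)"
proof -
  let ?U = "uniform_measure lborel {-\<Delta>/2..<\<Delta>/2}"
  have ae: "AE v in ?U. h v = c1 * indicator {-\<Delta>/2..<v0} v + c2 * indicator {v0..<\<Delta>/2} v"
    by (rule AE_uniform_measureI) (auto simp: h indicator_def)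
  have m1: "measure ?U {-\<Delta>/2..<v0} = (v0 + \<Delta>/2)/\<Delta>"
    using D v0 by (subst measure_uniform_measure) (auto simp: ennreal_neq_top)
  have m2: "measure ?U {v0..<\<Delta>/2} = (\<Delta>/2 - v0)/\<Delta>"
    using D v0 by (subst measure_uniform_measure) (auto simp: Int_absorb1)
  interpret U: prob_space ?U using D by (intro prob_space_uniform_measure) auto
  have "(\<integral>v. h v \<partial>?U) = (\<integral>v. c1 * indicator {-\<Delta>/2..<v0} v + c2 * indicator {v0..<\<Delta>/2} v \<partial>?U)"
    by (rule integral_cong_AE) (use ae hm in \<open>auto simp: measurable_cong_sets[OF sets_uniform_measure refl]\<close>)
  also have "\<dots> = c1 * measure ?U {-\<Delta>/2..<v0} + c2 * measure ?U {v0..<\<Delta>/2}"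
  proof -
    have i: "\<And>S. S \<in> sets borel \<Longrightarrow> integrable ?U (\<lambda>v. c * indicat_real S v)" for c
      by (intro integrable_mult_right U.integrable_const_bound[where B=1]) (auto simp: indicator_def)
    show ?thesis
      by (subst Bochner_Integration.integral_add[OF i i]) auto
  qed
  finally show ?thesis using m1 m2 by simp
qed

lemma quant_measurable[measurable]: "quant \<Delta> \<in> borel_measurable borel"
  unfolding quant_def by measurable

lemma clip_measurable[measurable]: "clip \<Delta> \<in> borel_measurable borel"
  unfolding clip_def by measurable

lemma quant_step:
  fixes \<Delta> y v :: real
  assumes D: "\<Delta> > 0" and v: "-\<Delta>/2 \<le> v" "v < \<Delta>/2"
  defines "f \<equiv> y/\<Delta> - of_int \<lfloor>y/\<Delta>\<rfloor>"
  defines "v0 \<equiv> (of_int \<lfloor>y/\<Delta>\<rfloor> + 1) * \<Delta> - \<Delta>/2 - y"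
  shows "quant \<Delta> (y + clip \<Delta> v) - y = (if v < v0 then - f * \<Delta> else (1 - f) * \<Delta>)"
proof -
  let ?k = "\<lfloor>y/\<Delta>\<rfloor>"
  have cv: "clip \<Delta> v = v" using v by (simp add: clip_def)
  have e: "(y + v)/\<Delta> + 1/2 = y/\<Delta> + (v + \<Delta>/2)/\<Delta>" using D by (simp add: field_simps)
  have lo: "0 \<le> (v + \<Delta>/2)/\<Delta>" "(v + \<Delta>/2)/\<Delta> < 1" using D v by (auto simp: field_simps)
  have k1: "of_int ?k \<le> y/\<Delta>" "y/\<Delta> < of_int ?k + 1" by linarith+
  have kd: "((of_int ?k + 1) * \<Delta> - y)/\<Delta> = of_int ?k + 1 - y/\<Delta>" using D by (simp add: field_simps)
  show ?thesis
  proof (cases "v < v0")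
    case True
    have "v + \<Delta>/2 < (of_int ?k + 1) * \<Delta> - y" using True unfolding v0_def by simp
    then have "(v + \<Delta>/2)/\<Delta> < ((of_int ?k + 1) * \<Delta> - y)/\<Delta>" using D by (simp add: divide_strict_right_mono)
    then have "(v + \<Delta>/2)/\<Delta> < of_int ?k + 1 - y/\<Delta>" using kd by simp
    then have fl: "\<lfloor>(y + v)/\<Delta> + 1/2\<rfloor> = ?k" using e lo k1 by (intro floor_unique) linarith+
    have "quant \<Delta> (y + clip \<Delta> v) - y = \<Delta> * of_int ?k - y" by (simp add: quant_def cv fl)
    also have "\<dots> = - f * \<Delta>" using D unfolding f_def by (simp add: field_simps)
    finally show ?thesis using True by simp
  next
    case False
    have "v + \<Delta>/2 \<ge> (of_int ?k + 1) * \<Delta> - y" using False unfolding v0_def by simp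
    then have "(v + \<Delta>/2)/\<Delta> \<ge> ((of_int ?k + 1) * \<Delta> - y)/\<Delta>" using D by (simp add: divide_right_mono)
    then have "(v + \<Delta>/2)/\<Delta> \<ge> of_int ?k + 1 - y/\<Delta>" using kd by simp
    then have fl: "\<lfloor>(y + v)/\<Delta> + 1/2\<rfloor> = ?k + 1" using e lo k1 by (intro floor_unique) (simp_all, linarith+)
    have "quant \<Delta> (y + clip \<Delta> v) - y = \<Delta> * (of_int ?k + 1) - y" by (simp add: quant_def cv fl)
    also have "\<dots> = (1 - f) * \<Delta>" using D unfolding f_def by (simp add: field_simps)
    finally show ?thesis using False by simp
  qed
qed

lemma quant_dither:
  fixes \<Delta> y :: real
  assumes D: "\<Delta> > 0"
  defines "f \<equiv> y/\<Delta> - of_int \<lfloor>y/\<Delta>\<rfloor>"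
  shows "(\<integral>v. quant \<Delta> (y + clip \<Delta> v) - y \<partial>uniform_measure lborel {-\<Delta>/2..<\<Delta>/2}) = 0"
    and "(\<integral>v. (quant \<Delta> (y + clip \<Delta> v) - y)^2 \<partial>uniform_measure lborel {-\<Delta>/2..<\<Delta>/2}) = \<Delta>^2 * (f * (1 - f))"
proof -
  define v0 where "v0 = (of_int \<lfloor>y/\<Delta>\<rfloor> + 1) * \<Delta> - \<Delta>/2 - y"
  have k1: "of_int \<lfloor>y/\<Delta>\<rfloor> \<le> y/\<Delta>" "y/\<Delta> < of_int \<lfloor>y/\<Delta>\<rfloor> + 1" by linarith+
  have f01: "0 \<le> f" "f < 1" using k1 unfolding f_def by linarith+
  have v0e: "v0 + \<Delta>/2 = (1 - f) * \<Delta>" "\<Delta>/2 - v0 = f * \<Delta>"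
    using D unfolding v0_def f_def by (simp_all add: field_simps)
  have "0 \<le> f * \<Delta>" "0 \<le> (1 - f) * \<Delta>" using f01 D by simp_all
  then have v0b: "-\<Delta>/2 \<le> v0" "v0 \<le> \<Delta>/2" using v0e by linarith+
  have "(\<integral>v. quant \<Delta> (y + clip \<Delta> v) - y \<partial>uniform_measure lborel {-\<Delta>/2..<\<Delta>/2})
      = (- f * \<Delta>) * ((v0 + \<Delta>/2)/\<Delta>) + ((1 - f) * \<Delta>) * ((\<Delta>/2 - v0)/\<Delta>)"
    apply (rule unif_step_integral[OF D v0b])
    subgoal by measurable
    subgoal for v using quant_step[OF D, of v y, folded f_def v0_def] by simp
    done
  also have "\<dots> = 0" using D by (simp add: v0e)
  finally show "(\<integral>v. quant \<Delta> (y + clip \<Delta> v) - y \<partial>uniform_measure lborel {-\<Delta>/2..<\<Delta>/2}) = 0" .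
  have "(\<integral>v. (quant \<Delta> (y + clip \<Delta> v) - y)^2 \<partial>uniform_measure lborel {-\<Delta>/2..<\<Delta>/2})
      = (- f * \<Delta>)^2 * ((v0 + \<Delta>/2)/\<Delta>) + ((1 - f) * \<Delta>)^2 * ((\<Delta>/2 - v0)/\<Delta>)"
    apply (rule unif_step_integral[OF D v0b])
    subgoal by measurable
    subgoal for v using quant_step[OF D, of v y, folded f_def v0_def] by simp
    done
  also have "\<dots> = \<Delta>^2 * (f * (1 - f))" using D by (simp add: v0e power2_eq_square field_simps)
  finally show "(\<integral>v. (quant \<Delta> (y + clip \<Delta> v) - y)^2 \<partial>uniform_measure lborel {-\<Delta>/2..<\<Delta>/2}) = \<Delta>^2 * (f * (1 - f))" .
qed


context prob_space begin

definition indep2 :: "'b measure \<Rightarrow> ('a \<Rightarrow> 'b) \<Rightarrow> 'c measure \<Rightarrow> ('a \<Rightarrow> 'c) \<Rightarrow> bool" where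
  "indep2 S X T Y \<longleftrightarrow> X \<in> measurable M S \<and> Y \<in> measurable M T \<and>
     (\<forall>A\<in>sets S. \<forall>B\<in>sets T. prob (X -` A \<inter> Y -` B \<inter> space M) = prob (X -` A \<inter> space M) * prob (Y -` B \<inter> space M))"

lemma indep2_from_var:
  assumes "indep_var S X T Y" shows "indep2 S X T Y"
  unfolding indep2_def
proof (intro conjI ballI)
  show "X \<in> measurable M S" "Y \<in> measurable M T" using assms by (blast dest: indep_var_rv1 indep_var_rv2)+
  fix A B assume "A \<in> sets S" "B \<in> sets T"
  from indep_varD[OF assms this] show "prob (X -` A \<inter> Y -` B \<inter> space M) = prob (X -` A \<inter> space M) * prob (Y -` B \<inter> space M)"
    by (simp add: vimage_def Int_def conj_ac)
qed

lemma indep2_compose: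
  assumes ind: "indep2 S X T Y" and f: "f \<in> measurable S S'" and g: "g \<in> measurable T T'"
  shows "indep2 S' (\<lambda>\<omega>. f (X \<omega>)) T' (\<lambda>\<omega>. g (Y \<omega>))"
proof -
  have X: "X \<in> measurable M S" and Y: "Y \<in> measurable M T" using ind by (auto simp: indep2_def)
  show ?thesis unfolding indep2_def
  proof (intro conjI ballI)
    show "(\<lambda>\<omega>. f (X \<omega>)) \<in> measurable M S'" using X f by (rule measurable_compose)
    show "(\<lambda>\<omega>. g (Y \<omega>)) \<in> measurable M T'" using Y g by (rule measurable_compose)
    fix A B assume A: "A \<in> sets S'" and B: "B \<in> sets T'"
    let ?A = "f -` A \<inter> space S" and ?B = "g -` B \<inter> space T"
    have sA: "?A \<in> sets S" using f A by (rule measurable_sets)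
    have sB: "?B \<in> sets T" using g B by (rule measurable_sets)
    have e1: "(\<lambda>\<omega>. f (X \<omega>)) -` A \<inter> (\<lambda>\<omega>. g (Y \<omega>)) -` B \<inter> space M = X -` ?A \<inter> Y -` ?B \<inter> space M"
      using measurable_space[OF X] measurable_space[OF Y] by auto
    have e2: "(\<lambda>\<omega>. f (X \<omega>)) -` A \<inter> space M = X -` ?A \<inter> space M"
      using measurable_space[OF X] by auto
    have e3: "(\<lambda>\<omega>. g (Y \<omega>)) -` B \<inter> space M = Y -` ?B \<inter> space M"
      using measurable_space[OF Y] by auto
    show "prob ((\<lambda>\<omega>. f (X \<omega>)) -` A \<inter> (\<lambda>\<omega>. g (Y \<omega>)) -` B \<inter> space M) =
          prob ((\<lambda>\<omega>. f (X \<omega>)) -` A \<inter> space M) * prob ((\<lambda>\<omega>. g (Y \<omega>)) -` B \<inter> space M)"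
      unfolding e1 e2 e3 using ind sA sB unfolding indep2_def by blast
  qed
qed

lemma indep2_distr:
  assumes ind: "indep2 S X T Y"
  shows "distr M S X \<Otimes>\<^sub>M distr M T Y = distr M (S \<Otimes>\<^sub>M T) (\<lambda>x. (X x, Y x))"
proof -
  have rvs: "X \<in> measurable M S" "Y \<in> measurable M T" using ind by (auto simp: indep2_def)
  then have XY: "random_variable (S \<Otimes>\<^sub>M T) (\<lambda>x. (X x, Y x))"
    by (rule measurable_Pair)
  interpret X: prob_space "distr M S X" by (rule prob_space_distr) fact
  interpret Y: prob_space "distr M T Y" by (rule prob_space_distr) fact
  interpret XY: pair_prob_space "distr M S X" "distr M T Y" ..
  show ?thesis
  proof (rule pair_measure_eqI)
    show "sigma_finite_measure (distr M S X)" ..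
    show "sigma_finite_measure (distr M T Y)" ..
    fix A B assume A: "A \<in> sets (distr M S X)" and B: "B \<in> sets (distr M T Y)"
    have "emeasure (distr M (S \<Otimes>\<^sub>M T) (\<lambda>x. (X x, Y x))) (A \<times> B) = emeasure M ((\<lambda>x. (X x, Y x)) -` (A \<times> B) \<inter> space M)"
      using A B by (intro emeasure_distr[OF XY]) auto
    also have "(\<lambda>x. (X x, Y x)) -` (A \<times> B) \<inter> space M = X -` A \<inter> Y -` B \<inter> space M" by auto
    also have "emeasure M (X -` A \<inter> Y -` B \<inter> space M) = emeasure M (X -` A \<inter> space M) * emeasure M (Y -` B \<inter> space M)"
      using ind A B by (simp add: indep2_def emeasure_eq_measure measure_nonneg ennreal_mult)
    also have "\<dots> = emeasure (distr M S X) A * emeasure (distr M T Y) B"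
      using rvs A B by (simp add: emeasure_distr)
    finally show "emeasure (distr M S X) A * emeasure (distr M T Y) B = emeasure (distr M (S \<Otimes>\<^sub>M T) (\<lambda>x. (X x, Y x))) (A \<times> B)" by simp
  qed simp
qed

lemma indep2_freeze:
  fixes G :: "'b \<times> 'c \<Rightarrow> real"
  assumes ind: "indep2 S X T Y" and G: "G \<in> borel_measurable (S \<Otimes>\<^sub>M T)" and bnd: "\<And>p. \<bar>G p\<bar> \<le> C"
  shows "(\<integral>\<omega>. G (X \<omega>, Y \<omega>) \<partial>M) = (\<integral>x. (\<integral>y. G (x,y) \<partial>distr M T Y) \<partial>distr M S X)"
proof -
  have rvs: "X \<in> measurable M S" "Y \<in> measurable M T" using ind by (auto simp: indep2_def)
  then have XY: "random_variable (S \<Otimes>\<^sub>M T) (\<lambda>x. (X x, Y x))"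
    by (rule measurable_Pair)
  interpret X: prob_space "distr M S X" by (rule prob_space_distr) fact
  interpret Y: prob_space "distr M T Y" by (rule prob_space_distr) fact
  interpret XY: pair_prob_space "distr M S X" "distr M T Y" ..
  have Gm: "G \<in> borel_measurable (distr M S X \<Otimes>\<^sub>M distr M T Y)"
    using G by (simp add: measurable_cong_sets[OF sets_pair_measure_cong[OF sets_distr sets_distr] refl])
  have "(\<integral>\<omega>. G (X \<omega>, Y \<omega>) \<partial>M) = (\<integral>p. G p \<partial>distr M (S \<Otimes>\<^sub>M T) (\<lambda>x. (X x, Y x)))"
    using XY G by (simp add: integral_distr)
  also have "\<dots> = (\<integral>p. G p \<partial>(distr M S X \<Otimes>\<^sub>M distr M T Y))" by (simp add: indep2_distr[OF ind])
  also have "\<dots> = (\<integral>x. (\<integral>y. G (x,y) \<partial>distr M T Y) \<partial>distr M S X)"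
    by (rule XY.integral_fst'[symmetric], rule XY.P.integrable_const_bound[where B=C]) (use bnd Gm in auto)
  finally show ?thesis .
qed

end


primrec st :: "('n::finite \<Rightarrow> real) \<Rightarrow> (nat \<Rightarrow> real) \<Rightarrow> real \<Rightarrow>
   (nat \<Rightarrow> 'n \<Rightarrow> 'n \<Rightarrow> bool) \<Rightarrow> (nat \<times> 'n \<times> 'n \<Rightarrow> real) \<Rightarrow> nat \<Rightarrow> 'n \<Rightarrow> real" where
  "st x0 \<alpha> \<Delta> Av Nv 0 = x0"
| "st x0 \<alpha> \<Delta> Av Nv (Suc i) =
     (\<lambda>n. (1 - \<alpha> i * real (degree (Av i) n)) * st x0 \<alpha> \<Delta> Av Nv i n
          + \<alpha> i * (\<Sum>l\<in>nbhd (Av i) n. quant \<Delta> (st x0 \<alpha> \<Delta> Av Nv i l + clip \<Delta> (Nv (i, n, l)))))"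

abbreviation PA :: "(nat \<Rightarrow> 'n \<Rightarrow> 'n \<Rightarrow> bool) measure" where
  "PA \<equiv> PiM UNIV (\<lambda>_. count_space UNIV)"
abbreviation PN :: "(nat \<times> 'n \<times> 'n \<Rightarrow> real) measure" where
  "PN \<equiv> PiM UNIV (\<lambda>_. borel)"

lemma st_qc:
  assumes "\<And>i n l. clip \<Delta> (\<nu> i n l \<omega>) = \<nu> i n l \<omega>"
  shows "qc_state x0 A \<nu> \<alpha> \<Delta> j \<omega> = st x0 \<alpha> \<Delta> (\<lambda>i. A i \<omega>) (\<lambda>(i, n, l). \<nu> i n l \<omega>) j"
  by (induction j) (simp_all add: assms)

lemma st_dep:
  assumes "\<And>i n l. i < j \<Longrightarrow> N (i, n, l) = N' (i, n, l)"
  shows "st x0 \<alpha> \<Delta> a N j = st x0 \<alpha> \<Delta> a N' j"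
  using assms
proof (induction j)
  case (Suc j)
  then have "st x0 \<alpha> \<Delta> a N j = st x0 \<alpha> \<Delta> a N' j" by simp
  then show ?case using Suc.prems by simp
qed simp

lemma nbhd_sum: "(\<Sum>l\<in>nbhd a n. f l) = (\<Sum>l\<in>UNIV. of_bool (a n l) * (f (l::'n::finite)::real))"
proof -
  have "(\<Sum>l\<in>UNIV. of_bool (a n l) * f (l::'n::finite)) = (\<Sum>l\<in>UNIV. if a n l then f l else 0)"
    by (rule sum.cong) auto
  also have "\<dots> = (\<Sum>l\<in>nbhd a n. f l)" by (simp add: sum.If_cases nbhd_def)
  finally show ?thesis by simp
qed

lemma degree_sum: "real (degree (a::'n::finite \<Rightarrow> 'n \<Rightarrow> bool) n) = (\<Sum>l\<in>UNIV. of_bool (a n l) :: real)"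
  unfolding degree_def using nbhd_sum[where a=a and n=n and f="\<lambda>_. 1"] by simp

lemma meas_A[measurable]: "(\<lambda>p. h (fst p i)) \<in> borel_measurable ((PA::(nat \<Rightarrow> 'n \<Rightarrow> 'n \<Rightarrow> bool) measure) \<Otimes>\<^sub>M (N::'b measure))"
proof -
  have "(\<lambda>p. fst p i) \<in> measurable ((PA::(nat \<Rightarrow> 'n \<Rightarrow> 'n \<Rightarrow> bool) measure) \<Otimes>\<^sub>M N) (count_space UNIV)"
    by measurable
  moreover have "h \<in> borel_measurable (count_space UNIV)" by simp
  ultimately show ?thesis by (rule measurable_compose)
qed

lemma meas_A_pred[measurable]: "Measurable.pred ((PA::(nat \<Rightarrow> 'n \<Rightarrow> 'n \<Rightarrow> bool) measure) \<Otimes>\<^sub>M (N::'b measure)) (\<lambda>p. fst p i n l)"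
proof -
  have "(\<lambda>p. fst p i) \<in> measurable ((PA::(nat \<Rightarrow> 'n \<Rightarrow> 'n \<Rightarrow> bool) measure) \<Otimes>\<^sub>M N) (count_space UNIV)"
    by measurable
  moreover have "(\<lambda>g. g n l) \<in> measurable (count_space UNIV) (count_space (UNIV::bool set))" by simp
  ultimately have m: "(\<lambda>p. fst p i n l) \<in> measurable ((PA::(nat \<Rightarrow> 'n \<Rightarrow> 'n \<Rightarrow> bool) measure) \<Otimes>\<^sub>M N) (count_space UNIV)"
    by (rule measurable_compose)
  have "{p \<in> space ((PA::(nat \<Rightarrow> 'n \<Rightarrow> 'n \<Rightarrow> bool) measure) \<Otimes>\<^sub>M N). fst p i n l} = (\<lambda>p. fst p i n l) -` {True} \<inter> space ((PA::(nat \<Rightarrow> 'n \<Rightarrow> 'n \<Rightarrow> bool) measure) \<Otimes>\<^sub>M N)"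
    by auto
  then show ?thesis unfolding pred_def using measurable_sets[OF m, of "{True}"] by simp
qed

lemma st_meas[measurable]:
  "(\<lambda>p. st x0 \<alpha> \<Delta> (fst p) (snd p) j n) \<in> borel_measurable ((PA::(nat \<Rightarrow> 'n::finite \<Rightarrow> 'n \<Rightarrow> bool) measure) \<Otimes>\<^sub>M PN)"
proof (induction j arbitrary: n)
  case 0 then show ?case by simp
next
  case (Suc j)
  have "(\<lambda>p. st x0 \<alpha> \<Delta> (fst p) (snd p) (Suc j) n) =
     (\<lambda>p. (1 - \<alpha> j * (\<Sum>l\<in>UNIV. of_bool (fst p j n l))) * st x0 \<alpha> \<Delta> (fst p) (snd p) j n
          + \<alpha> j * (\<Sum>l\<in>UNIV. of_bool (fst p j n l) * quant \<Delta> (st x0 \<alpha> \<Delta> (fst p) (snd p) j l + clip \<Delta> (snd p (j, n, l)))))"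
    by (simp add: nbhd_sum degree_sum)
  also have "\<dots> \<in> borel_measurable (PA \<Otimes>\<^sub>M PN)"
    using Suc by measurable
  finally show ?case .
qed

lemma quant_err: "\<Delta> > 0 \<Longrightarrow> \<bar>quant \<Delta> z - z\<bar> \<le> \<Delta>/2"
proof -
  assume D: "\<Delta> > 0"
  have "of_int \<lfloor>z/\<Delta> + 1/2\<rfloor> \<le> z/\<Delta> + 1/2" "z/\<Delta> + 1/2 < of_int \<lfloor>z/\<Delta> + 1/2\<rfloor> + 1" by linarith+
  then have "\<bar>of_int \<lfloor>z/\<Delta> + 1/2\<rfloor> - z/\<Delta>\<bar> \<le> 1/2" by linarith
  then have "\<Delta> * \<bar>of_int \<lfloor>z/\<Delta> + 1/2\<rfloor> - z/\<Delta>\<bar> \<le> \<Delta> * (1/2)" using D by (intro mult_left_mono) auto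
  moreover have "\<Delta> * \<bar>of_int \<lfloor>z/\<Delta> + 1/2\<rfloor> - z/\<Delta>\<bar> = \<bar>quant \<Delta> z - z\<bar>"
  proof -
    have "\<Delta> * (of_int \<lfloor>z/\<Delta> + 1/2\<rfloor> - z/\<Delta>) = quant \<Delta> z - z" using D by (simp add: quant_def field_simps)
    moreover have "\<Delta> * \<bar>u\<bar> = \<bar>\<Delta> * u\<bar>" for u using D by (simp add: abs_mult)
    ultimately show ?thesis by metis
  qed
  ultimately show ?thesis by simp
qed

lemma clip_bnd: "\<Delta> > 0 \<Longrightarrow> \<bar>clip \<Delta> v\<bar> \<le> \<Delta>/2"
  by (simp add: clip_def)

lemma st_bnd:
  assumes D: "\<Delta> > 0" and al: "\<And>i. \<alpha> i \<ge> 0"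
  shows "\<exists>C. \<forall>a N n. \<bar>st x0 \<alpha> \<Delta> a N j (n::'n::finite)\<bar> \<le> C"
proof (induction j)
  case 0
  show ?case by (rule exI[of _ "Max (range (\<lambda>n. \<bar>x0 n\<bar>))"]) simp
next
  case (Suc j)
  then obtain C where C: "\<And>a N n. \<bar>st x0 \<alpha> \<Delta> a N j (n::'n)\<bar> \<le> C" by blast
  let ?K = "real CARD('n)"
  show ?case
  proof (intro exI allI)
    fix a N n
    let ?x = "st x0 \<alpha> \<Delta> a N j"
    have d: "real (degree (a j) n) \<le> ?K" unfolding degree_def by (simp add: card_mono)
    have C0: "0 \<le> C" using C[of a N n] by simp
    have t1: "\<bar>(1 - \<alpha> j * real (degree (a j) n)) * ?x n\<bar> \<le> (1 + \<alpha> j * ?K) * C"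
    proof -
      have "\<bar>1 - \<alpha> j * real (degree (a j) n)\<bar> \<le> 1 + \<alpha> j * ?K"
        using al[of j] d by (smt (verit) mult_left_mono of_nat_0_le_iff zero_le_mult_iff)
      then show ?thesis unfolding abs_mult using C[of a N n] C0 by (intro mult_mono) auto
    qed
    have q: "\<bar>quant \<Delta> (?x l + clip \<Delta> (N (j, n, l)))\<bar> \<le> C + \<Delta>" for l
      using quant_err[OF D, of "?x l + clip \<Delta> (N (j, n, l))"] clip_bnd[OF D, of "N (j,n,l)"] C[of a N l]
      by linarith
    have "\<bar>\<Sum>l\<in>nbhd (a j) n. quant \<Delta> (?x l + clip \<Delta> (N (j, n, l)))\<bar> \<le> (\<Sum>l\<in>nbhd (a j) n. C + \<Delta>)"
      by (rule order_trans[OF sum_abs sum_mono]) (rule q)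
    also have "\<dots> = real (degree (a j) n) * (C + \<Delta>)" by (simp add: degree_def)
    also have "\<dots> \<le> ?K * (C + \<Delta>)" using d C0 D by (intro mult_right_mono) auto
    finally have t2: "\<bar>\<alpha> j * (\<Sum>l\<in>nbhd (a j) n. quant \<Delta> (?x l + clip \<Delta> (N (j, n, l))))\<bar> \<le> \<alpha> j * (?K * (C + \<Delta>))"
      unfolding abs_mult using al[of j] by (simp add: mult_left_mono)
    show "\<bar>st x0 \<alpha> \<Delta> a N (Suc j) n\<bar> \<le> (1 + \<alpha> j * ?K) * C + \<alpha> j * (?K * (C + \<Delta>))"
      using t1 t2 by simp
  qed
qed

definition ee :: "('n::finite \<Rightarrow> real) \<Rightarrow> (nat \<Rightarrow> real) \<Rightarrow> real \<Rightarrow> nat \<Rightarrow> 'n \<Rightarrow> 'n \<Rightarrow>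
    (nat \<Rightarrow> 'n \<Rightarrow> 'n \<Rightarrow> bool) \<times> (nat \<times> 'n \<times> 'n \<Rightarrow> real) \<Rightarrow> real" where
  "ee x0 \<alpha> \<Delta> i n l p = of_bool (fst p i n l) *
     (quant \<Delta> (st x0 \<alpha> \<Delta> (fst p) (snd p) i l + clip \<Delta> (snd p (i, n, l))) - st x0 \<alpha> \<Delta> (fst p) (snd p) i l)"

lemma st_incr:
  fixes p :: "(nat \<Rightarrow> 'n::finite \<Rightarrow> 'n \<Rightarrow> bool) \<times> (nat \<times> 'n \<times> 'n \<Rightarrow> real)"
  assumes sym: "\<And>n l. fst p i n l = fst p i l n"
  shows "avg (st x0 \<alpha> \<Delta> (fst p) (snd p) (Suc i)) = avg (st x0 \<alpha> \<Delta> (fst p) (snd p) i)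
     + \<alpha> i / real CARD('n) * (\<Sum>n\<in>UNIV. \<Sum>l\<in>UNIV. ee x0 \<alpha> \<Delta> i n l p)"
proof -
  define x where "x = st x0 \<alpha> \<Delta> (fst p) (snd p) i"
  define a where "a = fst p i"
  define q where "q n l = quant \<Delta> (x l + clip \<Delta> (snd p (i, n, l)))" for n l
  have pw: "st x0 \<alpha> \<Delta> (fst p) (snd p) (Suc i) n = x n - \<alpha> i * (\<Sum>l\<in>UNIV. of_bool (a n l) * x n)
        + \<alpha> i * (\<Sum>l\<in>UNIV. of_bool (a n l) * q n l)" for n
    by (simp add: nbhd_sum degree_sum sum_distrib_right algebra_simps x_def a_def q_def)
  have sw: "(\<Sum>n\<in>UNIV. \<Sum>l\<in>UNIV. of_bool (a n l) * x n) = (\<Sum>n\<in>UNIV. \<Sum>l\<in>UNIV. of_bool (a n l) * x l)"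
  proof -
    have "(\<Sum>n\<in>UNIV. \<Sum>l\<in>UNIV. of_bool (a n l) * x n) = (\<Sum>l\<in>UNIV. \<Sum>n\<in>UNIV. of_bool (a n l) * x n)"
      by (rule sum.swap)
    also have "\<dots> = (\<Sum>l\<in>UNIV. \<Sum>n\<in>UNIV. of_bool (a l n) * x n)"
      using sym by (simp add: a_def)
    finally show ?thesis .
  qed
  have ees: "(\<Sum>n\<in>UNIV. \<Sum>l\<in>UNIV. ee x0 \<alpha> \<Delta> i n l p) =
      (\<Sum>n\<in>UNIV. \<Sum>l\<in>UNIV. of_bool (a n l) * q n l) - (\<Sum>n\<in>UNIV. \<Sum>l\<in>UNIV. of_bool (a n l) * x l)"
    by (simp add: ee_def a_def q_def x_def right_diff_distrib sum_subtractf)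
  have "(\<Sum>n\<in>UNIV. st x0 \<alpha> \<Delta> (fst p) (snd p) (Suc i) n) = (\<Sum>n\<in>UNIV. x n - \<alpha> i * (\<Sum>l\<in>UNIV. of_bool (a n l) * x n)
        + \<alpha> i * (\<Sum>l\<in>UNIV. of_bool (a n l) * q n l))"
    by (rule sum.cong[OF refl pw])
  also have "\<dots> = (\<Sum>n\<in>UNIV. x n)
      - \<alpha> i * (\<Sum>n\<in>UNIV. \<Sum>l\<in>UNIV. of_bool (a n l) * x n) + \<alpha> i * (\<Sum>n\<in>UNIV. \<Sum>l\<in>UNIV. of_bool (a n l) * q n l)"
    by (simp add: pw sum.distrib sum_subtractf sum_distrib_left)
  also have "\<dots> = (\<Sum>n\<in>UNIV. x n) + \<alpha> i * (\<Sum>n\<in>UNIV. \<Sum>l\<in>UNIV. ee x0 \<alpha> \<Delta> i n l p)"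
    by (simp only: sw ees right_diff_distrib)
  finally show ?thesis unfolding avg_def x_def by (simp add: add_divide_distrib)
qed


locale qcl = prob_space M for M :: "'a measure" +
  fixes A :: "nat \<Rightarrow> 'a \<Rightarrow> 'n::finite \<Rightarrow> 'n \<Rightarrow> bool"
    and \<nu> :: "nat \<Rightarrow> 'n \<Rightarrow> 'n \<Rightarrow> 'a \<Rightarrow> real"
    and \<alpha> :: "nat \<Rightarrow> real"
    and \<Delta> :: real
    and x0 :: "'n \<Rightarrow> real"
  assumes sym: "\<And>i \<omega> n l. A i \<omega> n l = A i \<omega> l n"
    and irrefl: "\<And>i \<omega> n. \<not> A i \<omega> n n"
    and A_meas: "\<And>i. A i \<in> measurable M (count_space UNIV)"
    and A_ident: "\<And>i. distr M (count_space UNIV) (A i) = distr M (count_space UNIV) (A 0)"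
    and \<Delta>_pos: "\<Delta> > 0"
    and \<nu>_meas: "\<And>i n l. \<nu> i n l \<in> borel_measurable M"
    and \<nu>_indep: "indep_vars (\<lambda>_. borel) (\<lambda>(i, n, l). \<nu> i n l) UNIV"
    and \<nu>_unif: "\<And>i n l. distr M borel (\<nu> i n l) = uniform_measure lborel {-\<Delta>/2..<\<Delta>/2}"
    and A_\<nu>_indep: "indep_set
        (sets (vimage_algebra (space M) (\<lambda>\<omega> i. A i \<omega>) (PiM UNIV (\<lambda>_. count_space UNIV))))
        (sets (vimage_algebra (space M) (\<lambda>\<omega> (i, n, l). \<nu> i n l \<omega>) (PiM UNIV (\<lambda>_. borel))))"
    and \<alpha>_pos: "\<And>i. \<alpha> i > 0"
begin

definition Ab :: "'a \<Rightarrow> nat \<Rightarrow> 'n \<Rightarrow> 'n \<Rightarrow> bool" where "Ab \<omega> = (\<lambda>i. A i \<omega>)"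
definition Nb :: "'a \<Rightarrow> nat \<times> 'n \<times> 'n \<Rightarrow> real" where "Nb \<omega> = (\<lambda>(i, n, l). \<nu> i n l \<omega>)"

abbreviation U :: "real measure" where "U \<equiv> uniform_measure lborel {-\<Delta>/2..<\<Delta>/2}"

lemma Ab_meas[measurable]: "Ab \<in> measurable M PA"
proof -
  have "(\<lambda>\<omega>. \<lambda>i\<in>UNIV. A i \<omega>) \<in> measurable M PA" using A_meas by (intro measurable_restrict) auto
  moreover have "(\<lambda>\<omega>. \<lambda>i\<in>UNIV. A i \<omega>) = Ab" by (simp add: fun_eq_iff Ab_def)
  ultimately show ?thesis by simp
qed

lemma Nb_meas[measurable]: "Nb \<in> measurable M PN"
proof -
  have "(\<lambda>\<omega>. \<lambda>s\<in>UNIV. (case s of (i, n, l) \<Rightarrow> \<nu> i n l \<omega>)) \<in> measurable M PN"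
    using \<nu>_meas by (intro measurable_restrict) (auto split: prod.split)
  moreover have "(\<lambda>\<omega>. \<lambda>s\<in>UNIV. (case s of (i, n, l) \<Rightarrow> \<nu> i n l \<omega>)) = Nb"
    by (auto simp: Nb_def fun_eq_iff split: prod.split)
  ultimately show ?thesis by (simp add: restrict_UNIV)
qed

lemma I1: "indep2 PA Ab PN Nb"
  unfolding indep2_def
proof (intro conjI ballI)
  show "Ab \<in> measurable M PA" "Nb \<in> measurable M PN" by measurable
  fix X :: "(nat \<Rightarrow> 'n \<Rightarrow> 'n \<Rightarrow> bool) set" and Y :: "(nat \<times> 'n \<times> 'n \<Rightarrow> real) set"
  assume X: "X \<in> sets PA" and Y: "Y \<in> sets PN"
  have "Ab -` X \<inter> space M \<in> sets (vimage_algebra (space M) (\<lambda>\<omega> i. A i \<omega>) PA)"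
    using X by (subst sets_vimage_algebra2) (auto simp: Ab_def[abs_def] space_PiM)
  moreover have "Nb -` Y \<inter> space M \<in> sets (vimage_algebra (space M) (\<lambda>\<omega> (i, n, l). \<nu> i n l \<omega>) PN)"
    using Y by (subst sets_vimage_algebra2) (auto simp: Nb_def[abs_def] space_PiM)
  ultimately have "prob ((Ab -` X \<inter> space M) \<inter> (Nb -` Y \<inter> space M)) = prob (Ab -` X \<inter> space M) * prob (Nb -` Y \<inter> space M)"
    using A_\<nu>_indep unfolding indep_sets2_eq by blast
  moreover have "(Ab -` X \<inter> space M) \<inter> (Nb -` Y \<inter> space M) = Ab -` X \<inter> Nb -` Y \<inter> space M" by auto
  ultimately show "prob (Ab -` X \<inter> Nb -` Y \<inter> space M) = prob (Ab -` X \<inter> space M) * prob (Nb -` Y \<inter> space M)" by simp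
qed

lemma I2: "indep2 (PiM (-{t}) (\<lambda>_. borel)) (\<lambda>\<omega>. restrict (Nb \<omega>) (-{t})) borel (\<lambda>\<omega>. Nb \<omega> t)"
proof -
  have "indep_var (PiM (-{t}) (\<lambda>_. borel)) (\<lambda>\<omega>. restrict (\<lambda>s. (\<lambda>(i, n, l). \<nu> i n l) s \<omega>) (-{t}))
                   (PiM {t} (\<lambda>_. borel)) (\<lambda>\<omega>. restrict (\<lambda>s. (\<lambda>(i, n, l). \<nu> i n l) s \<omega>) {t})"
    by (rule indep_var_restrict[OF \<nu>_indep]) auto
  then have "indep2 (PiM (-{t}) (\<lambda>_. borel)) (\<lambda>\<omega>. restrict (\<lambda>s. (\<lambda>(i, n, l). \<nu> i n l) s \<omega>) (-{t}))
                   (PiM {t} (\<lambda>_. borel)) (\<lambda>\<omega>. restrict (\<lambda>s. (\<lambda>(i, n, l). \<nu> i n l) s \<omega>) {t})"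
    by (rule indep2_from_var)
  then have "indep2 (PiM (-{t}) (\<lambda>_. borel)) (\<lambda>\<omega>. id (restrict (\<lambda>s. (\<lambda>(i, n, l). \<nu> i n l) s \<omega>) (-{t})))
                   borel (\<lambda>\<omega>. (\<lambda>f. f t) (restrict (\<lambda>s. (\<lambda>(i, n, l). \<nu> i n l) s \<omega>) {t}))"
    by (rule indep2_compose) auto
  moreover have "(\<lambda>s. (\<lambda>(i, n, l). \<nu> i n l) s \<omega>) = Nb \<omega>" for \<omega>
    by (auto simp: Nb_def fun_eq_iff split: prod.split)
  ultimately show ?thesis by simp
qed

lemma Nb_distr: "distr M borel (\<lambda>\<omega>. Nb \<omega> t) = U"
proof -
  obtain i n l where t: "t = (i, n, l)" by (cases t) auto
  have "(\<lambda>\<omega>. Nb \<omega> t) = \<nu> i n l" by (auto simp: Nb_def t)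
  then show ?thesis using \<nu>_unif by simp
qed

abbreviation PB :: "nat \<times> 'n \<times> 'n \<Rightarrow> (nat \<times> 'n \<times> 'n \<Rightarrow> real) measure" where
  "PB t \<equiv> distr M (PiM (-{t}) (\<lambda>_. borel)) (\<lambda>\<omega>. restrict (Nb \<omega>) (-{t}))"

lemma upd_meas: "(\<lambda>x. (fst x)(t := snd x)) \<in> measurable (PiM (-{t}) (\<lambda>_. borel) \<Otimes>\<^sub>M borel) (PN :: (nat \<times> 'n \<times> 'n \<Rightarrow> real) measure)"
proof -
  have eq: "(\<lambda>x s. if s = t then snd x else fst x s) = (\<lambda>x. (fst x)(t := snd x))"
    by (auto simp: fun_eq_iff)
  show ?thesis unfolding eq[symmetric]
  proof (rule measurable_PiM_single')
    fix s :: "nat \<times> 'n \<times> 'n"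
    show "(\<lambda>x. if s = t then snd x else fst x s) \<in> borel_measurable (PiM (-{t}) (\<lambda>_. borel) \<Otimes>\<^sub>M borel)"
    proof (cases "s = t")
      case True then show ?thesis by simp
    next
      case False
      have "(\<lambda>x. fst x s) \<in> borel_measurable (PiM (-{t}) (\<lambda>_. borel) \<Otimes>\<^sub>M (borel :: real measure))"
        by (rule measurable_compose[OF measurable_fst measurable_component_singleton]) (use False in auto)
      then show ?thesis using False by simp
    qed
  qed (auto simp: space_PiM)
qed

lemma freeze3:
  fixes G :: "(nat \<Rightarrow> 'n \<Rightarrow> 'n \<Rightarrow> bool) \<times> (nat \<times> 'n \<times> 'n \<Rightarrow> real) \<Rightarrow> real"
  assumes G: "G \<in> borel_measurable (PA \<Otimes>\<^sub>M PN)" and bnd: "\<And>p. \<bar>G p\<bar> \<le> C"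
  shows "(\<integral>\<omega>. G (Ab \<omega>, Nb \<omega>) \<partial>M) = (\<integral>a. (\<integral>b. (\<integral>v. G (a, b(t := v)) \<partial>U) \<partial>PB t) \<partial>distr M PA Ab)"
proof -
  have s1: "(\<integral>\<omega>. G (Ab \<omega>, Nb \<omega>) \<partial>M) = (\<integral>a. (\<integral>N. G (a, N) \<partial>distr M PN Nb) \<partial>distr M PA Ab)"
    by (rule indep2_freeze[OF I1 G bnd])
  have s2: "(\<integral>N. G (a, N) \<partial>distr M PN Nb) = (\<integral>b. (\<integral>v. G (a, b(t := v)) \<partial>U) \<partial>PB t)" for a
  proof -
    have "(\<lambda>N. (a, N)) \<in> measurable PN (PA \<Otimes>\<^sub>M PN)"
      by (rule measurable_Pair) (auto simp: space_PiM)
    then have Ga: "(\<lambda>N. G (a, N)) \<in> borel_measurable PN" using G by (rule measurable_compose)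
    have G'm: "(\<lambda>x. G (a, (fst x)(t := snd x))) \<in> borel_measurable (PiM (-{t}) (\<lambda>_. borel) \<Otimes>\<^sub>M borel)"
    proof -
      have "(\<lambda>x. (a, (fst x)(t := snd x))) \<in> measurable (PiM (-{t}) (\<lambda>_. borel) \<Otimes>\<^sub>M borel) (PA \<Otimes>\<^sub>M PN)"
        by (rule measurable_Pair) (auto simp: space_PiM intro: upd_meas)
      then show ?thesis using G by (rule measurable_compose)
    qed
    have "(\<integral>N. G (a, N) \<partial>distr M PN Nb) = (\<integral>\<omega>. G (a, Nb \<omega>) \<partial>M)"
      by (rule integral_distr[OF Nb_meas Ga])
    also have "\<dots> = (\<integral>\<omega>. (\<lambda>x. G (a, (fst x)(t := snd x))) (restrict (Nb \<omega>) (-{t}), Nb \<omega> t) \<partial>M)"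
    proof (rule Bochner_Integration.integral_cong[OF refl])
      fix \<omega> have "(restrict (Nb \<omega>) (-{t}))(t := Nb \<omega> t) = Nb \<omega>" by (auto simp: fun_eq_iff)
      then show "G (a, Nb \<omega>) = (\<lambda>x. G (a, (fst x)(t := snd x))) (restrict (Nb \<omega>) (-{t}), Nb \<omega> t)" by simp
    qed
    also have "\<dots> = (\<integral>b. (\<integral>v. G (a, b(t := v)) \<partial>distr M borel (\<lambda>\<omega>. Nb \<omega> t)) \<partial>PB t)"
    proof -
      have F: "(\<integral>\<omega>. (\<lambda>x. G (a, (fst x)(t := snd x))) (restrict (Nb \<omega>) (-{t}), Nb \<omega> t) \<partial>M) =
          (\<integral>b. (\<integral>v. (\<lambda>x. G (a, (fst x)(t := snd x))) (b, v) \<partial>distr M borel (\<lambda>\<omega>. Nb \<omega> t)) \<partial>PB t)"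
        by (rule indep2_freeze[OF I2 G'm]) (use bnd in auto)
      then show ?thesis by (simp only: fst_conv snd_conv)
    qed
    finally show ?thesis by (simp add: Nb_distr)
  qed
  show ?thesis unfolding s1 s2 by (rule refl)
qed

end


definition BM :: "((nat \<Rightarrow> 'n::finite \<Rightarrow> 'n \<Rightarrow> bool) \<times> (nat \<times> 'n \<times> 'n \<Rightarrow> real) \<Rightarrow> real) \<Rightarrow> bool" where
  "BM f \<longleftrightarrow> f \<in> borel_measurable (PA \<Otimes>\<^sub>M PN) \<and> (\<exists>C. \<forall>p. \<bar>f p\<bar> \<le> C)"

lemma BM_const: "BM (\<lambda>p. c)" unfolding BM_def by auto

lemma BM_add: "BM f \<Longrightarrow> BM g \<Longrightarrow> BM (\<lambda>p. f p + g p)"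
  unfolding BM_def by (auto intro!: exI[of _ "_ + _"] abs_triangle_ineq[THEN order_trans] add_mono)

lemma BM_diff: "BM f \<Longrightarrow> BM g \<Longrightarrow> BM (\<lambda>p. f p - g p)"
  unfolding BM_def by (auto intro!: exI[of _ "_ + _"] abs_triangle_ineq4[THEN order_trans] add_mono)

lemma BM_mult: "BM f \<Longrightarrow> BM g \<Longrightarrow> BM (\<lambda>p. f p * g p)"
proof -
  assume "BM f" "BM g"
  then obtain C D where f: "f \<in> borel_measurable (PA \<Otimes>\<^sub>M PN)" "\<And>p. \<bar>f p\<bar> \<le> C"
    and g: "g \<in> borel_measurable (PA \<Otimes>\<^sub>M PN)" "\<And>p. \<bar>g p\<bar> \<le> D" unfolding BM_def by blast
  have "\<bar>f p * g p\<bar> \<le> C * D" for p unfolding abs_mult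
    using f(2)[of p] g(2)[of p] by (intro mult_mono) auto
  then show ?thesis using f g unfolding BM_def by auto
qed

lemma BM_sum: "finite I \<Longrightarrow> (\<And>i. i \<in> I \<Longrightarrow> BM (f i)) \<Longrightarrow> BM (\<lambda>p. \<Sum>i\<in>I. f i p)"
proof (induction I rule: finite_induct)
  case empty then show ?case by (simp add: BM_const)
next
  case (insert x F) then show ?case by (simp add: BM_add)
qed

lemma BM_pred: "Measurable.pred (PA \<Otimes>\<^sub>M PN) P \<Longrightarrow> BM (\<lambda>p. of_bool (P p))"
  unfolding BM_def by (auto intro!: exI[of _ 1])

lemma BM_st: "\<Delta> > 0 \<Longrightarrow> (\<And>i. \<alpha> i \<ge> 0) \<Longrightarrow> BM (\<lambda>p. st x0 \<alpha> \<Delta> (fst p) (snd p) j n)"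
proof -
  assume "\<Delta> > 0" "\<And>i. \<alpha> i \<ge> 0"
  then obtain C where "\<forall>a N n. \<bar>st x0 \<alpha> \<Delta> a N j n\<bar> \<le> C" using st_bnd by blast
  then show ?thesis unfolding BM_def by (intro conjI exI[of _ C]) auto
qed

lemma ee_bnd: "\<Delta> > 0 \<Longrightarrow> \<bar>ee x0 \<alpha> \<Delta> j n l p\<bar> \<le> \<Delta>"
proof -
  assume D: "\<Delta> > 0"
  let ?y = "st x0 \<alpha> \<Delta> (fst p) (snd p) j l" and ?c = "clip \<Delta> (snd p (j, n, l))"
  have "\<bar>quant \<Delta> (?y + ?c) - ?y\<bar> \<le> \<Delta>"
    using quant_err[OF D, of "?y + ?c"] clip_bnd[OF D, of "snd p (j, n, l)"] by linarith
  then show ?thesis unfolding ee_def using D by (auto simp: abs_mult)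
qed

lemma ee_meas[measurable]: "ee x0 \<alpha> \<Delta> j n l \<in> borel_measurable (PA \<Otimes>\<^sub>M PN)"
  unfolding ee_def[abs_def] by measurable

lemma BM_ee: "\<Delta> > 0 \<Longrightarrow> BM (ee x0 \<alpha> \<Delta> j n l)"
  unfolding BM_def using ee_bnd by (intro conjI exI[of _ \<Delta>]) auto

context qcl begin

definition Ex :: "((nat \<Rightarrow> 'n \<Rightarrow> 'n \<Rightarrow> bool) \<times> (nat \<times> 'n \<times> 'n \<Rightarrow> real) \<Rightarrow> real) \<Rightarrow> real" where
  "Ex f = (\<integral>\<omega>. f (Ab \<omega>, Nb \<omega>) \<partial>M)"

lemma Pi_meas[measurable]: "(\<lambda>\<omega>. (Ab \<omega>, Nb \<omega>)) \<in> measurable M (PA \<Otimes>\<^sub>M PN)"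
  by measurable

lemma BM_int: "BM f \<Longrightarrow> integrable M (\<lambda>\<omega>. f (Ab \<omega>, Nb \<omega>))"
proof -
  assume "BM f"
  then obtain C where f: "f \<in> borel_measurable (PA \<Otimes>\<^sub>M PN)" "\<And>p. \<bar>f p\<bar> \<le> C" unfolding BM_def by blast
  show ?thesis
    by (rule integrable_const_bound[where B=C]) (use f in auto)
qed

lemma Ex_add: "BM f \<Longrightarrow> BM g \<Longrightarrow> Ex (\<lambda>p. f p + g p) = Ex f + Ex g"
  unfolding Ex_def by (intro Bochner_Integration.integral_add BM_int)

lemma Ex_diff: "BM f \<Longrightarrow> BM g \<Longrightarrow> Ex (\<lambda>p. f p - g p) = Ex f - Ex g"
  unfolding Ex_def by (intro Bochner_Integration.integral_diff BM_int)

lemma Ex_cmult: "Ex (\<lambda>p. c * f p) = c * Ex f"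
  unfolding Ex_def by simp

lemma Ex_sum: "finite I \<Longrightarrow> (\<And>i. i \<in> I \<Longrightarrow> BM (f i)) \<Longrightarrow> Ex (\<lambda>p. \<Sum>i\<in>I. f i p) = (\<Sum>i\<in>I. Ex (f i))"
  unfolding Ex_def by (intro Bochner_Integration.integral_sum BM_int)

lemma Ex_mono: "BM f \<Longrightarrow> BM g \<Longrightarrow> (\<And>\<omega>. \<omega> \<in> space M \<Longrightarrow> f (Ab \<omega>, Nb \<omega>) \<le> g (Ab \<omega>, Nb \<omega>)) \<Longrightarrow> Ex f \<le> Ex g"
  unfolding Ex_def by (intro integral_mono BM_int)

lemma Ex_cong: "(\<And>\<omega>. \<omega> \<in> space M \<Longrightarrow> f (Ab \<omega>, Nb \<omega>) = g (Ab \<omega>, Nb \<omega>)) \<Longrightarrow> Ex f = Ex g"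
  unfolding Ex_def by (intro Bochner_Integration.integral_cong) auto

lemma U_prob: "prob_space U"
  using \<Delta>_pos by (intro prob_space_uniform_measure) auto

lemma U_const: "(\<integral>v. (c::real) \<partial>U) = c"
proof -
  interpret U: prob_space U by (rule U_prob)
  show ?thesis by (subst lebesgue_integral_const) (use U.prob_space in simp)
qed

lemma ee_upd:
  "ee x0 \<alpha> \<Delta> j n l (a, N((j, n, l) := v)) = of_bool (a j n l) *
     (quant \<Delta> (st x0 \<alpha> \<Delta> a N j l + clip \<Delta> v) - st x0 \<alpha> \<Delta> a N j l)"
proof -
  have "st x0 \<alpha> \<Delta> a (N((j, n, l) := v)) j = st x0 \<alpha> \<Delta> a N j" by (rule st_dep) auto
  then show ?thesis by (simp add: ee_def)
qed

lemma orth: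
  assumes w: "BM w" and wi: "\<And>a N v. w (a, N((j, n, l) := v)) = w (a, N)"
  shows "Ex (\<lambda>p. w p * ee x0 \<alpha> \<Delta> j n l p) = 0"
proof -
  obtain C where G: "(\<lambda>p. w p * ee x0 \<alpha> \<Delta> j n l p) \<in> borel_measurable (PA \<Otimes>\<^sub>M PN)"
      "\<And>p. \<bar>w p * ee x0 \<alpha> \<Delta> j n l p\<bar> \<le> C"
    using BM_mult[OF w BM_ee[OF \<Delta>_pos]] unfolding BM_def by blast
  have inner: "(\<integral>v. w (a, b((j, n, l) := v)) * ee x0 \<alpha> \<Delta> j n l (a, b((j, n, l) := v)) \<partial>U) = 0" for a b
  proof -
    let ?y = "st x0 \<alpha> \<Delta> a b j l"
    have "(\<integral>v. w (a, b((j, n, l) := v)) * ee x0 \<alpha> \<Delta> j n l (a, b((j, n, l) := v)) \<partial>U)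
        = (\<integral>v. (w (a, b) * of_bool (a j n l)) * (quant \<Delta> (?y + clip \<Delta> v) - ?y) \<partial>U)"
      by (simp add: wi ee_upd mult.assoc)
    also have "\<dots> = (w (a, b) * of_bool (a j n l)) * (\<integral>v. quant \<Delta> (?y + clip \<Delta> v) - ?y \<partial>U)"
      by (rule integral_mult_right_zero)
    also have "\<dots> = 0" using quant_dither(1)[OF \<Delta>_pos] by simp
    finally show ?thesis .
  qed
  show ?thesis unfolding Ex_def
    unfolding freeze3[OF G, of "(j, n, l)"] inner by simp
qed

lemma Ex_edge: "Ex (\<lambda>p. of_bool (fst p j n l)) = prob {\<omega> \<in> space M. A j \<omega> n l}"
proof -
  have "Ex (\<lambda>p. of_bool (fst p j n l)) = (\<integral>\<omega>. indicator {\<omega> \<in> space M. A j \<omega> n l} \<omega> \<partial>M)"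
    unfolding Ex_def by (intro Bochner_Integration.integral_cong) (auto simp: Ab_def indicator_def)
  also have "\<dots> = prob {\<omega> \<in> space M. A j \<omega> n l}" by (simp add: Int_absorb2)
  finally show ?thesis .
qed

lemma ee_sq: "Ex (\<lambda>p. (ee x0 \<alpha> \<Delta> j n l p)^2) \<le> \<Delta>^2/4 * prob {\<omega> \<in> space M. A j \<omega> n l}"
proof -
  define y where "y p = st x0 \<alpha> \<Delta> (fst p) (snd p) j l" for p :: "(nat \<Rightarrow> 'n \<Rightarrow> 'n \<Rightarrow> bool) \<times> (nat \<times> 'n \<times> 'n \<Rightarrow> real)"
  define f where "f p = y p / \<Delta> - of_int \<lfloor>y p / \<Delta>\<rfloor>" for p
  define \<phi> where "\<phi> p = of_bool (fst p j n l) * (\<Delta>^2 * (f p * (1 - f p)))" for p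
  have ym[measurable]: "y \<in> borel_measurable (PA \<Otimes>\<^sub>M PN)" unfolding y_def[abs_def] by measurable
  have fm[measurable]: "f \<in> borel_measurable (PA \<Otimes>\<^sub>M PN)" unfolding f_def[abs_def] by measurable
  have f01: "0 \<le> f p" "f p < 1" for p unfolding f_def by linarith+
  have fq: "f p * (1 - f p) \<le> 1/4" for p
  proof -
    have "0 \<le> (f p - 1/2)^2" by simp
    then show ?thesis by (simp add: power2_eq_square algebra_simps)
  qed
  have BMphi: "BM \<phi>"
  proof -
    have "\<bar>\<phi> p\<bar> \<le> \<Delta>^2" for p
    proof -
      have g: "0 \<le> f p * (1 - f p)" using f01[of p] by simp
      have "\<Delta>^2 * (f p * (1 - f p)) \<le> \<Delta>^2 * 1" using fq[of p] by (intro mult_left_mono) auto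
      moreover have "0 \<le> \<Delta>^2 * (f p * (1 - f p))" using g by simp
      ultimately show ?thesis unfolding \<phi>_def by (cases "fst p j n l") auto
    qed
    moreover have "\<phi> \<in> borel_measurable (PA \<Otimes>\<^sub>M PN)" unfolding \<phi>_def[abs_def] by measurable
    ultimately show ?thesis unfolding BM_def by blast
  qed
  obtain C1 where G1: "(\<lambda>p. (ee x0 \<alpha> \<Delta> j n l p)^2) \<in> borel_measurable (PA \<Otimes>\<^sub>M PN)"
      "\<And>p. \<bar>(ee x0 \<alpha> \<Delta> j n l p)^2\<bar> \<le> C1"
    using BM_mult[OF BM_ee[OF \<Delta>_pos] BM_ee[OF \<Delta>_pos], of x0 \<alpha> j n l] unfolding BM_def power2_eq_square by blast
  obtain C2 where G2: "\<phi> \<in> borel_measurable (PA \<Otimes>\<^sub>M PN)" "\<And>p. \<bar>\<phi> p\<bar> \<le> C2"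
    using BMphi unfolding BM_def by blast
  have yupd: "y (a, b((j, n, l) := v)) = y (a, b)" for a b v
  proof -
    have "st x0 \<alpha> \<Delta> a (b((j, n, l) := v)) j = st x0 \<alpha> \<Delta> a b j" by (rule st_dep) auto
    then show ?thesis unfolding y_def by simp
  qed
  have phiupd: "\<phi> (a, b((j, n, l) := v)) = \<phi> (a, b)" for a b v
    unfolding \<phi>_def f_def by (simp add: yupd)
  have inner1: "(\<integral>v. (ee x0 \<alpha> \<Delta> j n l (a, b((j, n, l) := v)))^2 \<partial>U) = \<phi> (a, b)" for a b
  proof -
    have "(\<integral>v. (ee x0 \<alpha> \<Delta> j n l (a, b((j, n, l) := v)))^2 \<partial>U)
        = (\<integral>v. of_bool (a j n l) * (quant \<Delta> (y (a, b) + clip \<Delta> v) - y (a, b))^2 \<partial>U)"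
      by (intro Bochner_Integration.integral_cong) (auto simp: ee_upd y_def power_mult_distrib)
    also have "\<dots> = of_bool (a j n l) * (\<integral>v. (quant \<Delta> (y (a, b) + clip \<Delta> v) - y (a, b))^2 \<partial>U)"
      by (rule integral_mult_right_zero)
    also have "\<dots> = \<phi> (a, b)"
      unfolding quant_dither(2)[OF \<Delta>_pos] \<phi>_def f_def by simp
    finally show ?thesis .
  qed
  have inner2: "(\<integral>v. \<phi> (a, b((j, n, l) := v)) \<partial>U) = \<phi> (a, b)" for a b
    unfolding phiupd by (rule U_const)
  have "Ex (\<lambda>p. (ee x0 \<alpha> \<Delta> j n l p)^2) = Ex \<phi>"
    unfolding Ex_def freeze3[OF G1, of "(j, n, l)"] freeze3[OF G2, of "(j, n, l)"] inner1 inner2 ..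
  also have "\<dots> \<le> Ex (\<lambda>p. \<Delta>^2/4 * of_bool (fst p j n l))"
  proof (rule Ex_mono[OF BMphi])
    show "BM (\<lambda>p. \<Delta>^2/4 * of_bool (fst p j n l))"
      by (intro BM_mult BM_const BM_pred) measurable
    fix \<omega> let ?p = "(Ab \<omega>, Nb \<omega>)"
    have "\<Delta>^2 * (f ?p * (1 - f ?p)) \<le> \<Delta>^2 * (1/4)" using fq[of ?p] by (intro mult_left_mono) auto
    then show "\<phi> ?p \<le> \<Delta>^2/4 * of_bool (fst ?p j n l)" unfolding \<phi>_def by auto
  qed
  also have "\<dots> = \<Delta>^2/4 * prob {\<omega> \<in> space M. A j \<omega> n l}" by (simp only: Ex_cmult Ex_edge)
  finally show ?thesis .
qed

end


definition Sv :: "('n::finite \<Rightarrow> real) \<Rightarrow> (nat \<Rightarrow> real) \<Rightarrow> real \<Rightarrow> nat \<Rightarrow>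
    (nat \<Rightarrow> 'n \<Rightarrow> 'n \<Rightarrow> bool) \<times> (nat \<times> 'n \<times> 'n \<Rightarrow> real) \<Rightarrow> real" where
  "Sv x0 \<alpha> \<Delta> j p = avg (st x0 \<alpha> \<Delta> (fst p) (snd p) j)"

lemma Sv_meas[measurable]: "Sv x0 \<alpha> \<Delta> j \<in> borel_measurable (PA \<Otimes>\<^sub>M PN)"
  unfolding Sv_def[abs_def] avg_def by measurable

lemma BM_S: "\<Delta> > 0 \<Longrightarrow> (\<And>i. \<alpha> i \<ge> 0) \<Longrightarrow> BM (Sv x0 \<alpha> \<Delta> j)"
proof -
  assume D: "\<Delta> > 0" and al: "\<And>i. \<alpha> i \<ge> 0"
  have "BM (\<lambda>p. (1 / real CARD('a)) * (\<Sum>n\<in>UNIV. st x0 \<alpha> \<Delta> (fst p) (snd p) j n))"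
    for x0 :: "'a::finite \<Rightarrow> real"
    by (intro BM_mult BM_const BM_sum BM_st D al) auto
  then show ?thesis unfolding Sv_def[abs_def] avg_def by simp
qed

lemma Sv_upd: "i \<le> m \<Longrightarrow> Sv x0 \<alpha> \<Delta> i (a, N((m, n, l) := v)) = Sv x0 \<alpha> \<Delta> i (a, N)"
proof -
  assume "i \<le> m"
  then have "st x0 \<alpha> \<Delta> a (N((m, n, l) := v)) i = st x0 \<alpha> \<Delta> a N i" by (intro st_dep) auto
  then show ?thesis by (simp add: Sv_def)
qed

lemma ee_upd_other: "(n', l') \<noteq> (n, l) \<Longrightarrow> ee x0 \<alpha> \<Delta> j n l (a, N((j, n', l') := v)) = ee x0 \<alpha> \<Delta> j n l (a, N)"
proof -
  assume ne: "(n', l') \<noteq> (n, l)"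
  have "st x0 \<alpha> \<Delta> a (N((j, n', l') := v)) j = st x0 \<alpha> \<Delta> a N j" by (intro st_dep) auto
  then show ?thesis using ne by (auto simp: ee_def)
qed

context qcl begin

abbreviation S :: "nat \<Rightarrow> (nat \<Rightarrow> 'n \<Rightarrow> 'n \<Rightarrow> bool) \<times> (nat \<times> 'n \<times> 'n \<Rightarrow> real) \<Rightarrow> real" where
  "S \<equiv> Sv x0 \<alpha> \<Delta>"

abbreviation E :: "nat \<Rightarrow> 'n \<times> 'n \<Rightarrow> (nat \<Rightarrow> 'n \<Rightarrow> 'n \<Rightarrow> bool) \<times> (nat \<times> 'n \<times> 'n \<Rightarrow> real) \<Rightarrow> real" where
  "E j q \<equiv> ee x0 \<alpha> \<Delta> j (fst q) (snd q)"

lemma al_nn: "\<alpha> i \<ge> 0" using \<alpha>_pos[of i] by simp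

lemma BMS: "BM (S j)" by (rule BM_S[OF \<Delta>_pos al_nn])
lemma BME: "BM (E j q)" by (rule BM_ee[OF \<Delta>_pos])

lemma S_incr: "S (Suc j) (Ab \<omega>, Nb \<omega>) = S j (Ab \<omega>, Nb \<omega>) + \<alpha> j / real CARD('n) * (\<Sum>q\<in>UNIV. E j q (Ab \<omega>, Nb \<omega>))"
proof -
  have "S (Suc j) (Ab \<omega>, Nb \<omega>) = S j (Ab \<omega>, Nb \<omega>) + \<alpha> j / real CARD('n) * (\<Sum>n\<in>UNIV. \<Sum>l\<in>UNIV. ee x0 \<alpha> \<Delta> j n l (Ab \<omega>, Nb \<omega>))"
    unfolding Sv_def by (rule st_incr) (simp add: Ab_def sym)
  also have "(\<Sum>n\<in>UNIV. \<Sum>l\<in>UNIV. ee x0 \<alpha> \<Delta> j n l (Ab \<omega>, Nb \<omega>)) = (\<Sum>q\<in>UNIV. E j q (Ab \<omega>, Nb \<omega>))"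
    by (simp add: sum.cartesian_product case_prod_beta)
  finally show ?thesis .
qed

lemma orthS:
  assumes w: "BM w" and wi: "\<And>a N n l v. w (a, N((j, n, l) := v)) = w (a, N)"
  shows "Ex (\<lambda>p. w p * (S (Suc j) p - S j p)) = 0"
proof -
  have "Ex (\<lambda>p. w p * (S (Suc j) p - S j p)) = Ex (\<lambda>p. \<alpha> j / real CARD('n) * (\<Sum>q\<in>UNIV. w p * E j q p))"
    by (rule Ex_cong) (simp add: S_incr sum_distrib_left algebra_simps)
  also have "\<dots> = \<alpha> j / real CARD('n) * (\<Sum>q\<in>UNIV. Ex (\<lambda>p. w p * E j q p))"
    by (subst Ex_cmult, subst Ex_sum) (auto intro: BM_mult[OF w BME])
  also have "\<dots> = 0"
    using orth[OF w wi] by simp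
  finally show ?thesis .
qed

lemma E_upd_other: "q' \<noteq> q \<Longrightarrow> E j q (a, N((j, fst q', snd q') := v)) = E j q (a, N)"
  by (rule ee_upd_other) (cases q; cases q'; auto)

lemma incr_sq: "Ex (\<lambda>p. (S (Suc j) p - S j p)^2) \<le> (\<alpha> j / real CARD('n))^2 * (\<Delta>^2/4 * (\<Sum>q\<in>UNIV. prob {\<omega> \<in> space M. A j \<omega> (fst q) (snd q)}))"
proof -
  let ?c = "\<alpha> j / real CARD('n)"
  have "Ex (\<lambda>p. (S (Suc j) p - S j p)^2) = Ex (\<lambda>p. ?c^2 * (\<Sum>q\<in>UNIV. \<Sum>q'\<in>UNIV. E j q p * E j q' p))"
    by (rule Ex_cong) (simp add: S_incr power2_eq_square sum_product algebra_simps)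
  also have "\<dots> = ?c^2 * (\<Sum>q\<in>UNIV. \<Sum>q'\<in>UNIV. Ex (\<lambda>p. E j q p * E j q' p))"
  proof -
    have "Ex (\<lambda>p. \<Sum>q\<in>UNIV. \<Sum>q'\<in>UNIV. E j q p * E j q' p) = (\<Sum>q\<in>UNIV. Ex (\<lambda>p. \<Sum>q'\<in>UNIV. E j q p * E j q' p))"
      by (rule Ex_sum) (auto intro!: BM_sum BM_mult BME)
    also have "\<dots> = (\<Sum>q\<in>UNIV. \<Sum>q'\<in>UNIV. Ex (\<lambda>p. E j q p * E j q' p))"
      by (intro sum.cong refl Ex_sum) (auto intro!: BM_mult BME)
    finally show ?thesis by (simp only: Ex_cmult)
  qed
  also have "(\<Sum>q\<in>UNIV. \<Sum>q'\<in>UNIV. Ex (\<lambda>p. E j q p * E j q' p)) = (\<Sum>q\<in>UNIV. Ex (\<lambda>p. (E j q p)^2))"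
  proof (rule sum.cong[OF refl])
    fix q :: "'n \<times> 'n"
    have z: "Ex (\<lambda>p. E j q p * E j q' p) = 0" if "q' \<noteq> q" for q'
    proof -
      have "Ex (\<lambda>p. E j q p * ee x0 \<alpha> \<Delta> j (fst q') (snd q') p) = 0"
        by (rule orth[OF BME]) (use E_upd_other[OF \<open>q' \<noteq> q\<close>] in simp)
      then show ?thesis by simp
    qed
    have "(\<Sum>q'\<in>UNIV. Ex (\<lambda>p. E j q p * E j q' p)) = Ex (\<lambda>p. E j q p * E j q p) + (\<Sum>q'\<in>UNIV - {q}. Ex (\<lambda>p. E j q p * E j q' p))"
      by (rule sum.remove) auto
    also have "(\<Sum>q'\<in>UNIV - {q}. Ex (\<lambda>p. E j q p * E j q' p)) = 0"
      by (rule sum.neutral) (use z in auto)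
    finally show "(\<Sum>q'\<in>UNIV. Ex (\<lambda>p. E j q p * E j q' p)) = Ex (\<lambda>p. (E j q p)^2)"
      by (simp add: power2_eq_square)
  qed
  also have "?c^2 * (\<Sum>q\<in>UNIV. Ex (\<lambda>p. (E j q p)^2)) \<le> ?c^2 * (\<Sum>q\<in>UNIV. \<Delta>^2/4 * prob {\<omega> \<in> space M. A j \<omega> (fst q) (snd q)})"
    by (intro mult_left_mono sum_mono ee_sq) auto
  finally show ?thesis by (simp add: sum_distrib_left)
qed

end


lemma first_sum:
  fixes s :: "nat \<Rightarrow> real"
  shows "(\<Sum>k\<le>n. of_bool (c < \<bar>s k\<bar> \<and> (\<forall>i<k. \<bar>s i\<bar> \<le> c)) :: real) = of_bool (\<exists>j\<le>n. c < \<bar>s j\<bar>)"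
proof (induction n)
  case 0 then show ?case by simp
next
  case (Suc n)
  show ?case
  proof (cases "\<exists>j\<le>n. c < \<bar>s j\<bar>")
    case True
    then have "\<not> (c < \<bar>s (Suc n)\<bar> \<and> (\<forall>i<Suc n. \<bar>s i\<bar> \<le> c))" by (auto simp: less_Suc_eq_le)
    moreover have "\<exists>j\<le>Suc n. c < \<bar>s j\<bar>" using True le_Suc_eq by blast
    ultimately show ?thesis using Suc True by simp
  next
    case False
    then have "(\<forall>i<Suc n. \<bar>s i\<bar> \<le> c)" by (auto simp: less_Suc_eq_le)
    moreover have "(\<exists>j\<le>Suc n. c < \<bar>s j\<bar>) \<longleftrightarrow> c < \<bar>s (Suc n)\<bar>" using False by (auto simp: le_Suc_eq)
    ultimately show ?thesis using Suc False by simp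
  qed
qed

context qcl begin

definition Ek :: "real \<Rightarrow> nat \<Rightarrow> (nat \<Rightarrow> 'n \<Rightarrow> 'n \<Rightarrow> bool) \<times> (nat \<times> 'n \<times> 'n \<Rightarrow> real) \<Rightarrow> bool" where
  "Ek c k p \<longleftrightarrow> c < \<bar>S k p\<bar> \<and> (\<forall>i<k. \<bar>S i p\<bar> \<le> c)"

lemma Ek_meas[measurable]: "Measurable.pred (PA \<Otimes>\<^sub>M PN) (Ek c k)"
  unfolding Ek_def[abs_def] by measurable

lemma Ek_upd: "k \<le> m \<Longrightarrow> Ek c k (a, N((m, n, l) := v)) = Ek c k (a, N)"
  unfolding Ek_def by (simp add: Sv_upd)

lemma BM_Ek: "BM (\<lambda>p. of_bool (Ek c k p))" by (rule BM_pred) measurable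

lemma Ex_const: "Ex (\<lambda>p. c) = c"
  unfolding Ex_def using prob_space by simp

lemma Ex_nonneg: "BM f \<Longrightarrow> (\<And>\<omega>. \<omega> \<in> space M \<Longrightarrow> 0 \<le> f (Ab \<omega>, Nb \<omega>)) \<Longrightarrow> 0 \<le> Ex f"
  using Ex_mono[OF BM_const, of f 0] Ex_const by simp

lemma step_ge:
  assumes w: "BM w" and wi: "\<And>a N n l v. w (a, N((m, n, l) := v)) = w (a, N)"
    and wn: "\<And>\<omega>. \<omega> \<in> space M \<Longrightarrow> 0 \<le> w (Ab \<omega>, Nb \<omega>)"
  shows "Ex (\<lambda>p. w p * (S (Suc m) p)^2) = Ex (\<lambda>p. w p * (S m p)^2) + Ex (\<lambda>p. w p * (S (Suc m) p - S m p)^2)"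
    and "Ex (\<lambda>p. w p * (S m p)^2) \<le> Ex (\<lambda>p. w p * (S (Suc m) p)^2)"
proof -
  let ?D = "\<lambda>p. S (Suc m) p - S m p"
  have BD: "BM ?D" by (intro BM_diff BMS)
  have a: "Ex (\<lambda>p. w p * (S (Suc m) p)^2) = Ex (\<lambda>p. (w p * (S m p)^2 + 2 * ((w p * S m p) * ?D p)) + w p * (?D p)^2)"
    by (rule Ex_cong) (simp add: power2_eq_square algebra_simps)
  also have "\<dots> = Ex (\<lambda>p. w p * (S m p)^2) + 2 * Ex (\<lambda>p. (w p * S m p) * ?D p) + Ex (\<lambda>p. w p * (?D p)^2)"
  proof -
    have B1: "BM (\<lambda>p. w p * (S m p)^2)" unfolding power2_eq_square by (intro BM_mult w BMS)
    have B2: "BM (\<lambda>p. 2 * ((w p * S m p) * ?D p))" by (intro BM_mult BM_const w BMS BD)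
    have B3: "BM (\<lambda>p. w p * (?D p)^2)" unfolding power2_eq_square by (intro BM_mult w BD)
    show ?thesis unfolding Ex_add[OF BM_add[OF B1 B2] B3] Ex_add[OF B1 B2] Ex_cmult ..
  qed
  also have "Ex (\<lambda>p. (w p * S m p) * ?D p) = 0"
    by (rule orthS) (auto intro!: BM_mult w BMS simp: wi Sv_upd)
  finally show eq: "Ex (\<lambda>p. w p * (S (Suc m) p)^2) = Ex (\<lambda>p. w p * (S m p)^2) + Ex (\<lambda>p. w p * (S (Suc m) p - S m p)^2)"
    by simp
  have "0 \<le> Ex (\<lambda>p. w p * (?D p)^2)"
  proof (rule Ex_nonneg)
    show "BM (\<lambda>p. w p * (?D p)^2)" unfolding power2_eq_square by (intro BM_mult w BD)
    fix \<omega> assume "\<omega> \<in> space M"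
    then show "0 \<le> w (Ab \<omega>, Nb \<omega>) * (?D (Ab \<omega>, Nb \<omega>))^2" using wn by simp
  qed
  then show "Ex (\<lambda>p. w p * (S m p)^2) \<le> Ex (\<lambda>p. w p * (S (Suc m) p)^2)" using eq by simp
qed

lemma claim1:
  assumes "k \<le> m"
  shows "Ex (\<lambda>p. of_bool (Ek c k p) * (S k p)^2) \<le> Ex (\<lambda>p. of_bool (Ek c k p) * (S m p)^2)"
  using assms
proof (induction m rule: dec_induct)
  case base then show ?case by simp
next
  case (step m)
  have "Ex (\<lambda>p. of_bool (Ek c k p) * (S m p)^2) \<le> Ex (\<lambda>p. of_bool (Ek c k p) * (S (Suc m) p)^2)"
    by (rule step_ge(2)[OF BM_Ek]) (use step in \<open>auto simp: Ek_upd\<close>)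
  then show ?case using step by simp
qed

lemma kolmogorov:
  assumes c: "c > 0"
  shows "c^2 * prob {\<omega> \<in> space M. \<exists>j\<le>n. c < \<bar>S j (Ab \<omega>, Nb \<omega>)\<bar>} \<le> Ex (\<lambda>p. (S n p)^2)"
proof -
  have "prob {\<omega> \<in> space M. \<exists>j\<le>n. c < \<bar>S j (Ab \<omega>, Nb \<omega>)\<bar>} = Ex (\<lambda>p. of_bool (\<exists>j\<le>n. c < \<bar>S j p\<bar>))"
  proof -
    have "Ex (\<lambda>p. of_bool (\<exists>j\<le>n. c < \<bar>S j p\<bar>)) = (\<integral>\<omega>. indicator {\<omega> \<in> space M. \<exists>j\<le>n. c < \<bar>S j (Ab \<omega>, Nb \<omega>)\<bar>} \<omega> \<partial>M)"
      unfolding Ex_def by (intro Bochner_Integration.integral_cong) (auto simp: indicator_def)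
    also have "\<dots> = prob {\<omega> \<in> space M. \<exists>j\<le>n. c < \<bar>S j (Ab \<omega>, Nb \<omega>)\<bar>}" by (simp add: Int_absorb2)
    finally show ?thesis by simp
  qed
  also have "\<dots> = Ex (\<lambda>p. \<Sum>k\<le>n. of_bool (Ek c k p))"
    by (rule Ex_cong) (simp add: Ek_def first_sum)
  also have "\<dots> = (\<Sum>k\<le>n. Ex (\<lambda>p. of_bool (Ek c k p)))"
    by (rule Ex_sum) (auto intro: BM_Ek)
  finally have P: "prob {\<omega> \<in> space M. \<exists>j\<le>n. c < \<bar>S j (Ab \<omega>, Nb \<omega>)\<bar>} = (\<Sum>k\<le>n. Ex (\<lambda>p. of_bool (Ek c k p)))" .
  have "c^2 * (\<Sum>k\<le>n. Ex (\<lambda>p. of_bool (Ek c k p))) = (\<Sum>k\<le>n. Ex (\<lambda>p. c^2 * of_bool (Ek c k p)))"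
    by (simp add: sum_distrib_left Ex_cmult)
  also have "\<dots> \<le> (\<Sum>k\<le>n. Ex (\<lambda>p. of_bool (Ek c k p) * (S k p)^2))"
  proof (rule sum_mono, rule Ex_mono)
    fix k \<omega>
    show "BM (\<lambda>p. c^2 * of_bool (Ek c k p))" by (intro BM_mult BM_const BM_Ek)
    show "BM (\<lambda>p. of_bool (Ek c k p) * (S k p)^2)" unfolding power2_eq_square by (intro BM_mult BMS BM_Ek)
    have "c^2 \<le> (S k (Ab \<omega>, Nb \<omega>))^2" if "c < \<bar>S k (Ab \<omega>, Nb \<omega>)\<bar>"
      using that c by (metis abs_ge_zero less_imp_le power2_abs power_mono)
    then show "c^2 * of_bool (Ek c k (Ab \<omega>, Nb \<omega>)) \<le> of_bool (Ek c k (Ab \<omega>, Nb \<omega>)) * (S k (Ab \<omega>, Nb \<omega>))^2"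
      by (auto simp: Ek_def)
  qed
  also have "\<dots> \<le> (\<Sum>k\<le>n. Ex (\<lambda>p. of_bool (Ek c k p) * (S n p)^2))"
    by (intro sum_mono claim1) auto
  also have "\<dots> = Ex (\<lambda>p. \<Sum>k\<le>n. of_bool (Ek c k p) * (S n p)^2)"
    by (rule Ex_sum[symmetric]) (auto simp: power2_eq_square intro!: BM_mult BMS BM_Ek)
  also have "\<dots> \<le> Ex (\<lambda>p. (S n p)^2)"
  proof (rule Ex_mono)
    show "BM (\<lambda>p. \<Sum>k\<le>n. of_bool (Ek c k p) * (S n p)^2)"
      unfolding power2_eq_square by (intro BM_sum BM_mult BMS BM_Ek) auto
    show "BM (\<lambda>p. (S n p)^2)" unfolding power2_eq_square by (intro BM_mult BMS)
    fix \<omega>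
    have "(\<Sum>k\<le>n. of_bool (Ek c k (Ab \<omega>, Nb \<omega>)) * (S n (Ab \<omega>, Nb \<omega>))^2)
        = (\<Sum>k\<le>n. of_bool (Ek c k (Ab \<omega>, Nb \<omega>)) :: real) * (S n (Ab \<omega>, Nb \<omega>))^2"
      by (simp add: sum_distrib_right)
    also have "\<dots> = of_bool (\<exists>j\<le>n. c < \<bar>S j (Ab \<omega>, Nb \<omega>)\<bar>) * (S n (Ab \<omega>, Nb \<omega>))^2"
      by (simp add: Ek_def first_sum)
    also have "\<dots> \<le> (S n (Ab \<omega>, Nb \<omega>))^2" by simp
    finally show "(\<Sum>k\<le>n. of_bool (Ek c k (Ab \<omega>, Nb \<omega>)) * (S n (Ab \<omega>, Nb \<omega>))^2) \<le> (S n (Ab \<omega>, Nb \<omega>))^2" .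
  qed
  finally show ?thesis unfolding P .
qed

end


lemma card_fiber2:
  fixes e :: "'n set"
  shows "card {q :: 'n \<times> 'n. fst q \<noteq> snd q \<and> {fst q, snd q} = e} \<le> 2"
proof (cases "\<exists>q. fst q \<noteq> snd q \<and> {fst q, snd q} = e")
  case False
  have emp: "{q :: 'n \<times> 'n. fst q \<noteq> snd q \<and> {fst q, snd q} = e} = {}"
  proof (rule equals0I)
    fix q assume "q \<in> {q :: 'n \<times> 'n. fst q \<noteq> snd q \<and> {fst q, snd q} = e}"
    then have "\<exists>q. fst q \<noteq> snd q \<and> {fst q, snd q} = e" by (intro exI[of _ q]) simp
    with False show False by contradiction
  qed
  show ?thesis unfolding emp by simp
next
  case True
  then obtain q0 :: "'n \<times> 'n" where q0: "fst q0 \<noteq> snd q0" "{fst q0, snd q0} = e" by (elim exE conjE)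
  define n where "n = fst q0"
  define l where "l = snd q0"
  have nl: "n \<noteq> l" "{n, l} = e" using q0 by (simp_all add: n_def l_def)
  have sub: "{q :: 'n \<times> 'n. fst q \<noteq> snd q \<and> {fst q, snd q} = e} \<subseteq> {(n, l), (l, n)}"
  proof
    fix q :: "'n \<times> 'n" assume "q \<in> {q :: 'n \<times> 'n. fst q \<noteq> snd q \<and> {fst q, snd q} = e}"
    then have "{fst q, snd q} = {n, l}" using nl(2) by simp
    then have "(fst q = n \<and> snd q = l) \<or> (fst q = l \<and> snd q = n)" by (simp add: doubleton_eq_iff)
    then show "q \<in> {(n, l), (l, n)}" by (cases q) auto
  qed
  have "card {q :: 'n \<times> 'n. fst q \<noteq> snd q \<and> {fst q, snd q} = e} \<le> card {(n, l), (l, n)}"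
    by (rule card_mono[OF _ sub]) simp
  also have "\<dots> \<le> 2" by (rule card_insert_le_m1) auto
  finally show ?thesis .
qed

lemma arith1: "(N::real) \<noteq> 0 \<Longrightarrow> (x / N)^2 * (y / 4 * (2 * z)) = x^2 * (y * z / (2 * N^2))"
  by (simp add: power_divide field_simps)

context qcl begin

lemma prob_edge_ident: "prob {\<omega> \<in> space M. A j \<omega> n l} = prob {\<omega> \<in> space M. A 0 \<omega> n l}"
proof -
  have e: "prob {\<omega> \<in> space M. A i \<omega> n l} = measure (distr M (count_space UNIV) (A i)) {g. g n l}" for i
  proof -
    have "A i -` {g. g n l} \<inter> space M = {\<omega> \<in> space M. A i \<omega> n l}" by auto
    then show ?thesis by (simp add: measure_distr[OF A_meas])
  qed
  show ?thesis unfolding e A_ident[of j] ..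
qed

lemma edge_sum: "(\<Sum>q\<in>UNIV. prob {\<omega> \<in> space M. A j \<omega> (fst q) (snd q)}) \<le> 2 * real (card (realizable_edges M A))"
proof -
  define p where "p q = prob {\<omega> \<in> space M. A 0 \<omega> (fst q) (snd q)}" for q :: "'n \<times> 'n"
  define Pos where "Pos = {q. p q > 0}"
  define R where "R = realizable_edges M A"
  have "(\<Sum>q\<in>UNIV. prob {\<omega> \<in> space M. A j \<omega> (fst q) (snd q)}) = (\<Sum>q\<in>UNIV. p q)"
    unfolding p_def by (rule sum.cong[OF refl prob_edge_ident])
  also have "\<dots> = (\<Sum>q\<in>Pos. p q)"
  proof (rule sum.mono_neutral_right)
    show "\<forall>q\<in>UNIV - Pos. p q = 0"
    proof
      fix q assume "q \<in> UNIV - Pos"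
      then have "\<not> p q > 0" by (simp add: Pos_def)
      moreover have "p q \<ge> 0" by (simp add: p_def)
      ultimately show "p q = 0" by simp
    qed
  qed auto
  also have "\<dots> \<le> (\<Sum>q\<in>Pos. 1)" by (rule sum_mono) (simp add: p_def)
  also have "\<dots> = real (card Pos)" by simp
  also have "card Pos \<le> 2 * card R"
  proof -
    have "Pos \<subseteq> (\<Union>e\<in>R. {q :: 'n \<times> 'n. fst q \<noteq> snd q \<and> {fst q, snd q} = e})"
    proof
      fix q assume q: "q \<in> Pos"
      then have pq: "p q > 0" by (simp add: Pos_def)
      have ne: "fst q \<noteq> snd q"
      proof
        assume "fst q = snd q"
        then have e0: "{\<omega> \<in> space M. A 0 \<omega> (fst q) (snd q)} = {}" using irrefl by auto
        show False using pq unfolding p_def e0 by simp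
      qed
      have "{fst q, snd q} \<in> R" unfolding R_def realizable_edges_def using ne pq by (auto simp: p_def)
      then show "q \<in> (\<Union>e\<in>R. {q :: 'n \<times> 'n. fst q \<noteq> snd q \<and> {fst q, snd q} = e})" using ne by auto
    qed
    have fR: "finite R" by (rule finite_subset[of _ "UNIV"]) auto
    have "card Pos \<le> card (\<Union>e\<in>R. {q :: 'n \<times> 'n. fst q \<noteq> snd q \<and> {fst q, snd q} = e})"
      by (rule card_mono) (simp, fact)
    also have "\<dots> \<le> (\<Sum>e\<in>R. card {q :: 'n \<times> 'n. fst q \<noteq> snd q \<and> {fst q, snd q} = e})"
      by (rule card_UN_le[OF fR])
    also have "\<dots> \<le> (\<Sum>e\<in>R. 2)" by (rule sum_mono) (rule card_fiber2)
    finally show ?thesis by simp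
  qed
  then have "real (card Pos) \<le> 2 * real (card R)" by linarith
  finally show ?thesis by (simp add: R_def)
qed

lemma second_moment:
  "Ex (\<lambda>p. (S n p)^2) \<le> (avg x0)^2 + (\<Sum>j<n. (\<alpha> j)^2) * (\<Delta>^2 * real (card (realizable_edges M A)) / (2 * (real CARD('n))^2))"
proof (induction n)
  case 0
  have "Ex (\<lambda>p. (S 0 p)^2) = Ex (\<lambda>p. (avg x0)^2)" by (rule Ex_cong) (simp add: Sv_def)
  then show ?case by (simp add: Ex_const)
next
  case (Suc m)
  let ?K = "\<Delta>^2 * real (card (realizable_edges M A)) / (2 * (real CARD('n))^2)"
  have eq: "Ex (\<lambda>p. 1 * (S (Suc m) p)^2) = Ex (\<lambda>p. 1 * (S m p)^2) + Ex (\<lambda>p. 1 * (S (Suc m) p - S m p)^2)"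
    by (rule step_ge(1)[OF BM_const]) auto
  have "Ex (\<lambda>p. (S (Suc m) p - S m p)^2) \<le> (\<alpha> m / real CARD('n))^2 * (\<Delta>^2/4 * (\<Sum>q\<in>UNIV. prob {\<omega> \<in> space M. A m \<omega> (fst q) (snd q)}))"
    by (rule incr_sq)
  also have "\<dots> \<le> (\<alpha> m / real CARD('n))^2 * (\<Delta>^2/4 * (2 * real (card (realizable_edges M A))))"
    by (rule mult_left_mono[OF mult_left_mono[OF edge_sum]]) simp_all
  also have "\<dots> = (\<alpha> m)^2 * ?K" by (rule arith1) simp
  finally have D: "Ex (\<lambda>p. (S (Suc m) p - S m p)^2) \<le> (\<alpha> m)^2 * ?K" .
  have sumeq: "(\<Sum>j<Suc m. (\<alpha> j)^2) * ?K = (\<Sum>j<m. (\<alpha> j)^2) * ?K + (\<alpha> m)^2 * ?K"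
    by (simp add: distrib_right add_divide_distrib)
  have eqS: "Ex (\<lambda>p. (S (Suc m) p)^2) = Ex (\<lambda>p. (S m p)^2) + Ex (\<lambda>p. (S (Suc m) p - S m p)^2)"
    using eq by simp
  have "Ex (\<lambda>p. (S (Suc m) p)^2) \<le> ((avg x0)^2 + (\<Sum>j<m. (\<alpha> j)^2) * ?K) + (\<alpha> m)^2 * ?K"
    unfolding eqS by (rule add_mono[OF Suc.IH D])
  also have "\<dots> = (avg x0)^2 + (\<Sum>j<Suc m. (\<alpha> j)^2) * ?K" by (simp only: sumeq add.assoc)
  finally show ?case .
qed

end


lemma final_arith:
  fixes p B a :: real
  assumes "0 \<le> p" "p \<le> 1" "p \<le> B / a^2" "0 \<le> B" "a > 0"
  shows "p \<le> sqrt B / a"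
proof -
  define s where "s = sqrt B / a"
  have s0: "0 \<le> s" using assms by (simp add: s_def)
  have s2: "s^2 = B / a^2" using assms by (simp add: s_def power_divide)
  show ?thesis
  proof (cases "s \<ge> 1")
    case True then show ?thesis using assms by (simp add: s_def[symmetric])
  next
    case False
    then have "s * s \<le> s * 1" using s0 by (intro mult_left_mono) auto
    then have "s^2 \<le> s" by (simp add: power2_eq_square)
    then show ?thesis using assms s2 by (simp add: s_def[symmetric])
  qed
qed

context qcl begin

lemma good_AE: "AE \<omega> in M. \<forall>s::nat \<times> 'n \<times> 'n. clip \<Delta> (\<nu> (fst s) (fst (snd s)) (snd (snd s)) \<omega>) = \<nu> (fst s) (fst (snd s)) (snd (snd s)) \<omega>"
proof (subst AE_all_countable, intro allI)
  fix s :: "nat \<times> 'n \<times> 'n"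
  obtain i n l where s: "s = (i, n, l)" by (cases s) auto
  have "AE v in U. v \<in> {-\<Delta>/2..<\<Delta>/2}" by (rule AE_uniform_measureI) auto
  then have "AE v in distr M borel (\<nu> i n l). v \<in> {-\<Delta>/2..<\<Delta>/2}" unfolding \<nu>_unif .
  then have "AE \<omega> in M. \<nu> i n l \<omega> \<in> {-\<Delta>/2..<\<Delta>/2}" by (rule AE_distrD[OF \<nu>_meas])
  then show "AE \<omega> in M. clip \<Delta> (\<nu> (fst s) (fst (snd s)) (snd (snd s)) \<omega>) = \<nu> (fst s) (fst (snd s)) (snd (snd s)) \<omega>"
    by eventually_elim (auto simp: s clip_def)
qed

lemma final:
  assumes a: "a > 0" and sq: "summable (\<lambda>i. (\<alpha> i)^2)"
  shows "measure M {\<omega> \<in> space M. (SUP j. ereal \<bar>avg (qc_state x0 A \<nu> \<alpha> \<Delta> j \<omega>)\<bar>) > ereal a}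
         \<le> sqrt ((avg x0)^2 + 2 * real (card (realizable_edges M A)) * \<Delta>^2 / (3 * (real CARD('n))^2) * (\<Sum>j. (\<alpha> j)^2)) / a"
proof -
  define R where "R = real (card (realizable_edges M A))"
  define NN where "NN = real CARD('n)"
  define B where "B = (avg x0)^2 + 2 * R * \<Delta>^2 / (3 * NN^2) * (\<Sum>j. (\<alpha> j)^2)"
  define T where "T n = {\<omega> \<in> space M. \<exists>j\<le>n. a < \<bar>S j (Ab \<omega>, Nb \<omega>)\<bar>}" for n
  have Tm: "T n \<in> sets M" for n unfolding T_def by measurable
  have sum0: "0 \<le> (\<Sum>j. (\<alpha> j)^2)" using sq by (intro suminf_nonneg) auto
  have R0: "0 \<le> R" by (simp add: R_def)
  have N0: "0 < NN" by (simp add: NN_def)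
  have B0: "0 \<le> B" unfolding B_def using R0 N0 sum0 by (intro add_nonneg_nonneg mult_nonneg_nonneg) auto
  have Tb: "prob (T n) \<le> B / a^2" for n
  proof -
    have "a^2 * prob (T n) \<le> Ex (\<lambda>p. (S n p)^2)" unfolding T_def by (rule kolmogorov[OF a])
    also have "\<dots> \<le> (avg x0)^2 + (\<Sum>j<n. (\<alpha> j)^2) * (\<Delta>^2 * R / (2 * NN^2))"
      using second_moment[of n] by (simp add: R_def NN_def)
    also have "\<dots> \<le> (avg x0)^2 + (\<Sum>j. (\<alpha> j)^2) * (2 * R * \<Delta>^2 / (3 * NN^2))"
    proof -
      have "(\<Sum>j<n. (\<alpha> j)^2) \<le> (\<Sum>j. (\<alpha> j)^2)" by (rule sum_le_suminf[OF sq]) auto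
      moreover have "\<Delta>^2 * R / (2 * NN^2) \<le> 2 * R * \<Delta>^2 / (3 * NN^2)"
      proof -
        have X: "0 \<le> \<Delta>^2 * R / NN^2" using R0 by simp
        have "\<Delta>^2 * R / (2 * NN^2) = (\<Delta>^2 * R / NN^2) / 2" by simp
        moreover have "2 * R * \<Delta>^2 / (3 * NN^2) = (\<Delta>^2 * R / NN^2) * (2/3)" by (simp add: ac_simps)
        ultimately show ?thesis using X by simp
      qed
      moreover have "0 \<le> \<Delta>^2 * R / (2 * NN^2)" using R0 by simp
      ultimately have "(\<Sum>j<n. (\<alpha> j)^2) * (\<Delta>^2 * R / (2 * NN^2)) \<le> (\<Sum>j. (\<alpha> j)^2) * (2 * R * \<Delta>^2 / (3 * NN^2))"
        using sum0 by (intro mult_mono) auto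
      then show ?thesis by (rule add_left_mono)
    qed
    also have "\<dots> = B" by (simp add: B_def)
    finally have "a^2 * prob (T n) \<le> B" .
    then show ?thesis using a by (simp add: pos_le_divide_eq mult.commute)
  qed
  have inc: "incseq T" unfolding incseq_def T_def by (auto intro: order_trans)
  have lim: "(\<lambda>n. prob (T n)) \<longlonglongrightarrow> prob (\<Union>n. T n)"
    by (rule finite_Lim_measure_incseq) (use Tm inc in auto)
  have UB: "prob (\<Union>n. T n) \<le> B / a^2"
    by (rule LIMSEQ_le_const2[OF lim]) (use Tb in auto)
  have Um: "(\<Union>n. T n) \<in> sets M" using Tm by auto
  obtain N0 where N0s: "{\<omega> \<in> space M. \<not> (\<forall>s::nat \<times> 'n \<times> 'n. clip \<Delta> (\<nu> (fst s) (fst (snd s)) (snd (snd s)) \<omega>) = \<nu> (fst s) (fst (snd s)) (snd (snd s)) \<omega>)} \<subseteq> N0"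
      and N0e: "emeasure M N0 = 0" and N0m: "N0 \<in> sets M"
    using good_AE by (rule AE_E)
  have N0p: "prob N0 = 0" using N0e by (simp add: measure_def)
  let ?Sup = "{\<omega> \<in> space M. (SUP j. ereal \<bar>avg (qc_state x0 A \<nu> \<alpha> \<Delta> j \<omega>)\<bar>) > ereal a}"
  have sub: "?Sup \<subseteq> (\<Union>n. T n) \<union> N0"
  proof
    fix \<omega> assume w: "\<omega> \<in> ?Sup"
    show "\<omega> \<in> (\<Union>n. T n) \<union> N0"
    proof (cases "\<omega> \<in> N0")
      case True then show ?thesis by simp
    next
      case False
      then have good: "clip \<Delta> (\<nu> i n l \<omega>) = \<nu> i n l \<omega>" for i n l
        using N0s w by (auto dest!: spec[of _ "(i, n, l)"])
      have eqS: "avg (qc_state x0 A \<nu> \<alpha> \<Delta> j \<omega>) = S j (Ab \<omega>, Nb \<omega>)" for j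
        using st_qc[of \<Delta> \<nu> \<omega> x0 A \<alpha> j, OF good] by (simp add: Sv_def Ab_def Nb_def)
      from w obtain j where "ereal a < ereal \<bar>avg (qc_state x0 A \<nu> \<alpha> \<Delta> j \<omega>)\<bar>"
        by (auto simp: less_SUP_iff)
      then have "a < \<bar>S j (Ab \<omega>, Nb \<omega>)\<bar>" using eqS by simp
      then have "\<omega> \<in> T j" using w unfolding T_def by auto
      then show ?thesis by auto
    qed
  qed
  have Pb: "measure M ?Sup \<le> prob (\<Union>n. T n)"
  proof (cases "?Sup \<in> sets M")
    case True
    have "measure M ?Sup \<le> measure M ((\<Union>n. T n) \<union> N0)"
      by (rule finite_measure_mono[OF sub]) (use Um N0m in auto)
    also have "\<dots> \<le> prob (\<Union>n. T n) + prob N0" by (rule measure_Un_le[OF Um N0m])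
    finally show ?thesis using N0p by simp
  next
    case False
    then have "measure M ?Sup = 0" by (rule measure_notin_sets)
    then show ?thesis by simp
  qed
  have "measure M ?Sup \<le> sqrt B / a"
    by (rule final_arith) (use Pb UB B0 a in \<open>auto intro: order_trans\<close>)
  then show ?thesis by (simp add: B_def R_def NN_def)
qed

end


theorem mainTheorem9:
  fixes M :: "'a measure"
    and A :: "nat \<Rightarrow> 'a \<Rightarrow> 'n::finite \<Rightarrow> 'n \<Rightarrow> bool"
    and \<nu> :: "nat \<Rightarrow> 'n \<Rightarrow> 'n \<Rightarrow> 'a \<Rightarrow> real"
    and \<alpha> :: "nat \<Rightarrow> real"
    and \<Delta> a :: real
    and x0 :: "'n \<Rightarrow> real"
  assumes prob: "prob_space M"
    and N2: "CARD('n) \<ge> 2"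
    and sym: "\<And>i \<omega> n l. A i \<omega> n l = A i \<omega> l n"
    and irrefl: "\<And>i \<omega> n. \<not> A i \<omega> n n"
    and A_meas: "\<And>i. A i \<in> measurable M (count_space UNIV)"
    and A_indep: "prob_space.indep_vars M (\<lambda>_. count_space UNIV) A UNIV"
    and A_ident: "\<And>i. distr M (count_space UNIV) (A i) = distr M (count_space UNIV) (A 0)"
    and \<Delta>_pos: "\<Delta> > 0"
    and \<nu>_meas: "\<And>i n l. \<nu> i n l \<in> borel_measurable M"
    and \<nu>_indep: "prob_space.indep_vars M (\<lambda>_. borel) (\<lambda>(i, n, l). \<nu> i n l) UNIV"
    and \<nu>_unif: "\<And>i n l. distr M borel (\<nu> i n l) =
                     uniform_measure lborel {-\<Delta>/2..<\<Delta>/2}"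
    and A_\<nu>_indep: "prob_space.indep_set M
        (sets (vimage_algebra (space M) (\<lambda>\<omega> i. A i \<omega>) (PiM UNIV (\<lambda>_. count_space UNIV))))
        (sets (vimage_algebra (space M) (\<lambda>\<omega> (i, n, l). \<nu> i n l \<omega>) (PiM UNIV (\<lambda>_. borel))))"
    and \<alpha>_pos: "\<And>i. \<alpha> i > 0"
    and \<alpha>_div: "filterlim (\<lambda>k. \<Sum>i<k. \<alpha> i) at_top sequentially"
    and \<alpha>_sq: "summable (\<lambda>i. (\<alpha> i)\<^sup>2)"
    and a_pos: "a > 0"
  shows "measure M {\<omega> \<in> space M.
            (SUP j. ereal \<bar>avg (qc_state x0 A \<nu> \<alpha> \<Delta> j \<omega>)\<bar>) > ereal a}
         \<le> sqrt ((avg x0)\<^sup>2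
                  + 2 * real (card (realizable_edges M A)) * \<Delta>\<^sup>2 / (3 * (real CARD('n))\<^sup>2)
                    * (\<Sum>j. (\<alpha> j)\<^sup>2)) / a"
proof -
  interpret qcl M A \<nu> \<alpha> \<Delta> x0
    using prob sym irrefl A_meas A_ident \<Delta>_pos \<nu>_meas \<nu>_indep \<nu>_unif A_\<nu>_indep \<alpha>_pos
    unfolding qcl_def qcl_axioms_def by blast
  show ?thesis by (rule final[OF a_pos \<alpha>_sq])
qed

end
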